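(* Consider a finite MDP with state space $\mathcal{X}=\{1,\dots,n\}$, finite action set $\mathcal{A}$, costs $c(i,a)\in\mathbb{R}$, discount factor $\vartheta\in(0,1)$, nominal transition probability vectors $p^a_i\in\Delta_n$, confidence regions $U^a_i$ and proxy confidence regions $\widehat{U^a_i}$ as described in the context, and let $\mathrm{Q}^*$ be the robust optimal $\mathrm{Q}$-factors. Let the step lengths $\gamma_t\ge 0$ satisfy $\sum_{t=0}^\infty\gamma_t=\infty$ and $\sum_{t=0}^\infty\gamma_t^2<\infty$. Let $\beta^a_i:=\max_{y\in\widehat{U^a_i}}\min_{x\in U^a_i}\|y-x\|_1$ and $\beta:=\max_{i\in\mathcal{X},a\in\mathcal{A}}\beta^a_i$. If $\vartheta(1+\beta)<1$, then with probability $1$ the robust $\mathrm{Q}$-iteration \[ \mathrm{Q}_t(i,a)=(1-\gamma_t)\mathrm{Q}_{t-1}(i,a)+\gamma_t\Big(c(i,a)+\vartheta\,\sigma_{\widehat{U^a_i}}(v_{t-1})+\vartheta\min_{a'\in\mathcal{A}}\mathrm{Q}_{t-1}(j,a')\Big), \] where $v_{t-1}(k):=\min_{a\in\mathcal{A}}\mathrm{Q}_{t-1}(k,a)$ and $j$ is a state sampled according to $p^a_i$, converges to $\mathrm{Q}$-factors $\mathrm{Q}'$ that are $\varepsilon$-optimal, i.e. $\|\mathrm{Q}'-\mathrm{Q}^*\|_\infty\le\varepsilon\|\mathrm{Q}^*\|_\infty$, where $\varepsilon:=\dfrac{\vartheta\beta}{1-\vartheta(1+\beta)}$.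
   Context: Setting: for each state $i\in\mathcal{X}$ and action $a\in\mathcal{A}$, $p^a_i\in\Delta_n$ (the probability simplex in $\mathbb{R}^n$) is an unknown transition probability vector from which next states can only be sampled. A confidence region $U^a_i\subseteq\mathbb{R}^n$ (nonempty, compact) defines the uncertainty set $\mathcal{P}^a_i:=\{p^a_i+x\mid x\in U^a_i\}$, assumed to lie in $\Delta_n$. The proxy confidence region $\widehat{U^a_i}\supseteq U^a_i$ is a nonempty compact set (obtained by dropping the constraints that keep $\mathcal{P}^a_i$ inside the simplex); it need not satisfy $p^a_i+\widehat{U^a_i}\subseteq\Delta_n$. For $S\subseteq\mathbb{R}^n$, $\sigma_S(v):=\sup_{s\in S}s^\top v$. The robust optimal $\mathrm{Q}$-factors $\mathrm{Q}^*:\mathcal{X}\times\mathcal{A}\to\mathbb{R}$ are the solution of $\mathrm{Q}^*(i,a)=c(i,a)+\vartheta\,\sigma_{\mathcal{P}^a_i}(v^* )$ with $v^*(k)=\min_{a\in\mathcal{A}}\mathrm{Q}^*(k,a)$ (the Q-factors of the policy minimizing the worst-case expected discounted cost over transitions chosen from the sets $\mathcal{P}^a_i$). $\mathrm{Q}$-factors are viewed as $|\mathcal{X}|\times|\mathcal{A}|$ matrices and $\|\mathrm{Q}\|_\infty=\max_{i,a}|\mathrm{Q}(i,a)|$. In the iteration, $\mathrm{Q}_0$ is arbitrary and at each step the update is applied to each pair $(i,a)$ with a fresh sample $j\sim p^a_i$. *)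

theory Defs
  imports "HOL-Probability.Probability"
begin

definition support_fun :: "(real ^ 'n) set \<Rightarrow> real ^ 'n \<Rightarrow> real" where
  "support_fun S v = (SUP s\<in>S. s \<bullet> v)"

definition norm1 :: "real ^ 'n::finite \<Rightarrow> real" where
  "norm1 x = (\<Sum>k\<in>UNIV. \<bar>x $ k\<bar>)"

definition pmf_vec :: "'n::finite pmf \<Rightarrow> real ^ 'n" where
  "pmf_vec q = (\<chi> k. pmf q k)"

definition prob_simplex :: "(real ^ 'n::finite) set" where
  "prob_simplex = {x. (\<forall>k. 0 \<le> x $ k) \<and> (\<Sum>k\<in>UNIV. x $ k) = 1}"

definition Qnorm :: "('s::finite \<Rightarrow> 'a::finite \<Rightarrow> real) \<Rightarrow> real" where
  "Qnorm Q = Max (range (\<lambda>(i, a). \<bar>Q i a\<bar>))"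

definition vfun :: "('s::finite \<Rightarrow> 'a::finite \<Rightarrow> real) \<Rightarrow> real ^ 's" where
  "vfun Q = (\<chi> k. Min (range (Q k)))"

definition beta_ia :: "(real ^ 'n::finite) set \<Rightarrow> (real ^ 'n) set \<Rightarrow> real" where
  "beta_ia Uhat U = (SUP y\<in>Uhat. INF x\<in>U. norm1 (y - x))"

text \<open>The robust Q-iteration driven by a sample path omega: omega (t, i, a) is the
  next state sampled from p_i^a at step t (only used for t >= 1).\<close>
primrec robust_Q_iter ::
  "('s::finite \<Rightarrow> 'a::finite \<Rightarrow> real) \<Rightarrow> ('s \<Rightarrow> 'a \<Rightarrow> real) \<Rightarrow> real \<Rightarrow>
   ('s \<Rightarrow> 'a \<Rightarrow> (real ^ 's) set) \<Rightarrow> (nat \<Rightarrow> real) \<Rightarrow>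
   (nat \<times> 's \<times> 'a \<Rightarrow> 's) \<Rightarrow> nat \<Rightarrow> 's \<Rightarrow> 'a \<Rightarrow> real" where
  "robust_Q_iter Q0 c \<theta> Uhat \<gamma> \<omega> 0 = Q0"
| "robust_Q_iter Q0 c \<theta> Uhat \<gamma> \<omega> (Suc t) =
     (let Qp = robust_Q_iter Q0 c \<theta> Uhat \<gamma> \<omega> t in
      (\<lambda>i a. (1 - \<gamma> (Suc t)) * Qp i a
         + \<gamma> (Suc t) * (c i a + \<theta> * support_fun (Uhat i a) (vfun Qp)
                          + \<theta> * Min (range (Qp (\<omega> (Suc t, i, a)))))))"

end

theory Submission
  imports Defs
begin

lemma nonsummable_big:
  fixes g :: "nat \<Rightarrow> real"
  assumes g0: "\<And>t. 0 \<le> g t" and ns: "\<not> summable g"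
  shows "\<exists>n. \<forall>t\<ge>n. B \<le> sum g {..<t}"
proof -
  have "\<exists>n. B < sum g {..<n}"
  proof (rule ccontr)
    assume "\<not> ?thesis"
    then have "\<And>n. sum g {..<n} \<le> B" by (simp add: not_less)
    then have "summable g" using summableI_nonneg_bounded[of g B] g0 by blast
    with ns show False by simp
  qed
  then obtain n where n: "B < sum g {..<n}" by blast
  have "\<forall>t\<ge>n. B \<le> sum g {..<t}"
  proof (intro allI impI)
    fix t assume "n \<le> t"
    then have "sum g {..<n} \<le> sum g {..<t}"
      by (intro sum_mono2) (auto simp: g0)
    with n show "B \<le> sum g {..<t}" by simp
  qed
  then show ?thesis by blast
qed

lemma L1:
  fixes x g e :: "nat \<Rightarrow> real" and \<kappa> :: real
  assumes kp: "\<kappa> > 0" and g0: "\<And>t. 0 \<le> g t" and ns: "\<not> summable g" and e0: "e \<longlonglongrightarrow> 0"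
    and ev: "eventually (\<lambda>t. 0 \<le> x t \<and> \<kappa> * g t \<le> 1 \<and> x (Suc t) \<le> (1 - \<kappa> * g t) * x t + \<kappa> * g t * e t) sequentially"
  shows "x \<longlonglongrightarrow> 0"
proof (rule LIMSEQ_I)
  fix r :: real assume r: "0 < r"
  have "eventually (\<lambda>t. e t < r/2) sequentially"
    using e0 r by (auto dest: order_tendstoD(2)[where a="r/2"])
  with ev have "eventually (\<lambda>t. (0 \<le> x t \<and> \<kappa> * g t \<le> 1 \<and> x (Suc t) \<le> (1 - \<kappa> * g t) * x t + \<kappa> * g t * e t) \<and> e t < r/2) sequentially"
    by (rule eventually_conj)
  then obtain T where T: "\<And>t. t \<ge> T \<Longrightarrow> 0 \<le> x t \<and> \<kappa> * g t \<le> 1 \<and> x (Suc t) \<le> (1 - \<kappa> * g t) * x t + \<kappa> * g t * e t \<and> e t < r/2"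
    unfolding eventually_sequentially by blast
  define y where "y t = x t - r/2" for t
  define P where "P t = max (y T) 0 * exp (- \<kappa> * sum g {T..<t})" for t
  have P0: "0 \<le> P t" for t unfolding P_def by simp
  have step: "y (Suc t) \<le> (1 - \<kappa> * g t) * y t" if "t \<ge> T" for t
  proof -
    from T[OF that] have a: "x (Suc t) \<le> (1 - \<kappa> * g t) * x t + \<kappa> * g t * e t" and b: "e t < r/2"
      and c: "0 \<le> \<kappa> * g t" using kp g0 by auto
    have "\<kappa> * g t * e t \<le> \<kappa> * g t * (r/2)" using b c by (intro mult_left_mono) auto
    with a show ?thesis unfolding y_def by (simp add: algebra_simps)
  qed
  have inv: "y (T + n) \<le> P (T + n)" for n
  proof (induction n)
    case 0 then show ?case by (simp add: P_def)
  next
    case (Suc n)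
    let ?t = "T + n"
    have gk: "0 \<le> 1 - \<kappa> * g ?t" using T[of ?t] by simp
    have gk0: "0 \<le> \<kappa> * g ?t" using kp g0 by simp
    have "y (Suc ?t) \<le> (1 - \<kappa> * g ?t) * y ?t" by (rule step) simp
    also have "\<dots> \<le> (1 - \<kappa> * g ?t) * P ?t" using Suc gk by (intro mult_left_mono) auto
    also have "\<dots> \<le> exp (- (\<kappa> * g ?t)) * P ?t"
      using exp_ge_add_one_self[of "- (\<kappa> * g ?t)"] P0[of ?t] by (intro mult_right_mono) auto
    also have "\<dots> = P (Suc ?t)"
    proof -
      have "exp (- (\<kappa> * g ?t) - \<kappa> * sum g {T..<?t}) = exp (- (\<kappa> * g ?t)) * exp (- (\<kappa> * sum g {T..<?t}))"
        by (simp add: exp_diff exp_minus field_simps)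
      then show ?thesis unfolding P_def by (simp add: sum.atLeastLessThan_Suc algebra_simps)
    qed
    finally show ?case by simp
  qed
  define B where "B = (ln (max (y T) 0 + 1) - ln (r/2)) / \<kappa>"
  obtain n where n: "\<forall>t\<ge>n. B + sum g {..<T} \<le> sum g {..<t}" using nonsummable_big[OF g0 ns] by blast
  show "\<exists>no. \<forall>t\<ge>no. norm (x t - 0) < r"
  proof (intro exI allI impI)
    fix t assume tn: "max n T \<le> t"
    have sT: "sum g {..<t} = sum g {..<T} + sum g {T..<t}"
      using tn by (metis max.bounded_iff sum.atLeastLessThan_concat lessThan_atLeast0 zero_le)
    have Bs: "B \<le> sum g {T..<t}" using n tn sT by fastforce
    have "P t < r/2"
    proof -
      have "- \<kappa> * sum g {T..<t} \<le> - \<kappa> * B" using Bs kp by simp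
      also have "- \<kappa> * B = ln (r/2) - ln (max (y T) 0 + 1)" unfolding B_def using kp by simp
      finally have "exp (- \<kappa> * sum g {T..<t}) \<le> exp (ln (r/2) - ln (max (y T) 0 + 1))" by simp
      also have "\<dots> = (r/2) / (max (y T) 0 + 1)" using r by (simp add: exp_diff)
      finally have E: "exp (- \<kappa> * sum g {T..<t}) \<le> (r/2) / (max (y T) 0 + 1)" .
      have "P t \<le> max (y T) 0 * ((r/2) / (max (y T) 0 + 1))"
        unfolding P_def by (intro mult_left_mono E) simp
      also have "\<dots> < r/2"
        using r by (simp add: field_simps) 
      finally show ?thesis .
    qed
    moreover have "y t \<le> P t" using inv[of "t - T"] tn by simp
    moreover have "0 \<le> x t" using T[of t] tn by simp
    ultimately show "norm (x t - 0) < r" unfolding y_def by simp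
  qed
qed

lemma L2:
  fixes u g :: "nat \<Rightarrow> real" and C :: real
  assumes g0: "\<And>t. 0 \<le> g t" and ns: "\<not> summable g" and gl: "g \<longlonglongrightarrow> 0"
    and su: "summable (\<lambda>t. g t * u t)" and u0: "\<And>t. 0 \<le> u t" and C: "C > 0"
    and ev: "eventually (\<lambda>t. u (Suc t) \<le> u t + C * g t) sequentially"
  shows "u \<longlonglongrightarrow> 0"
proof (rule LIMSEQ_I)
  fix r :: real assume r: "0 < r"
  define \<epsilon> where "\<epsilon> = r / 4"
  have ep: "0 < \<epsilon>" using r by (simp add: \<epsilon>_def)
  have evg: "eventually (\<lambda>t. g t < \<epsilon> / C) sequentially"
    using gl ep C by (auto dest: order_tendstoD(2)[where a="\<epsilon>/C"])
  have "(\<lambda>n. sum (\<lambda>t. g t * u t) {..<n}) \<longlonglongrightarrow> suminf (\<lambda>t. g t * u t)"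
    using su by (rule summable_LIMSEQ)
  then have "eventually (\<lambda>n. suminf (\<lambda>t. g t * u t) - \<epsilon> * \<epsilon> / C < sum (\<lambda>t. g t * u t) {..<n}) sequentially"
    using ep C by (intro order_tendstoD(1)) auto
  with ev evg have "eventually (\<lambda>t. (u (Suc t) \<le> u t + C * g t \<and> g t < \<epsilon> / C) \<and>
       suminf (\<lambda>t. g t * u t) - \<epsilon> * \<epsilon> / C < sum (\<lambda>t. g t * u t) {..<t}) sequentially"
    by (intro eventually_conj) auto
  then obtain N where N: "\<And>t. t \<ge> N \<Longrightarrow> u (Suc t) \<le> u t + C * g t \<and> g t < \<epsilon> / C \<and>
       suminf (\<lambda>t. g t * u t) - \<epsilon> * \<epsilon> / C < sum (\<lambda>t. g t * u t) {..<t}"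
    unfolding eventually_sequentially by blast
  have "\<exists>N'\<ge>N. u N' \<le> \<epsilon>"
  proof (rule ccontr)
    assume "\<not> ?thesis"
    then have big: "\<And>t. t \<ge> N \<Longrightarrow> \<epsilon> < u t" by force
    have "summable (\<lambda>t. g t * u t / \<epsilon>)" using su by (rule summable_divide)
    moreover have "eventually (\<lambda>t. norm (g t) \<le> g t * u t / \<epsilon>) sequentially"
      unfolding eventually_sequentially
    proof (intro exI allI impI)
      fix t assume "N \<le> t"
      then have "g t * \<epsilon> \<le> g t * u t" using big[of t] g0[of t] by (intro mult_left_mono) auto
      then show "norm (g t) \<le> g t * u t / \<epsilon>" using ep g0[of t] by (simp add: field_simps)
    qed
    ultimately have "summable g" by (rule summable_comparison_test_ev[rotated])
    with ns show False by simp
  qed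
  then obtain N' where N': "N' \<ge> N" "u N' \<le> \<epsilon>" by blast
  have inv: "u (N' + n) \<le> 2 * \<epsilon> + (C / \<epsilon>) * sum (\<lambda>s. g s * u s) {N'..<N' + n}" for n
  proof (induction n)
    case 0 then show ?case using N' ep by simp
  next
    case (Suc n)
    let ?t = "N' + n"
    have Nt: "?t \<ge> N" using N' by simp
    have S0: "0 \<le> sum (\<lambda>s. g s * u s) {N'..<Suc ?t}" using g0 u0 by (intro sum_nonneg) auto
    have cS: "0 \<le> (C / \<epsilon>) * sum (\<lambda>s. g s * u s) {N'..<Suc ?t}" using S0 C ep by simp
    show ?case
    proof (cases "u ?t \<le> \<epsilon>")
      case True
      have "u (Suc ?t) \<le> u ?t + C * g ?t" using N[OF Nt] by simp
      also have "C * g ?t \<le> \<epsilon>" using N[OF Nt] C by (simp add: field_simps)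
      then have "u ?t + C * g ?t \<le> 2 * \<epsilon>" using True by simp
      finally show ?thesis using cS by simp
    next
      case False
      have "C * g ?t \<le> (C / \<epsilon>) * (g ?t * u ?t)"
      proof -
        have "g ?t * \<epsilon> \<le> g ?t * u ?t" using False g0[of ?t] by (intro mult_left_mono) auto
        then show ?thesis using C ep by (simp add: field_simps)
      qed
      then have "u (Suc ?t) \<le> u ?t + (C / \<epsilon>) * (g ?t * u ?t)" using N[OF Nt] by simp
      also have "\<dots> \<le> 2 * \<epsilon> + (C / \<epsilon>) * sum (\<lambda>s. g s * u s) {N'..<?t} + (C / \<epsilon>) * (g ?t * u ?t)"
        using Suc by simp
      also have "\<dots> = 2 * \<epsilon> + (C / \<epsilon>) * sum (\<lambda>s. g s * u s) {N'..<Suc ?t}"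
        by (simp add: algebra_simps)
      finally show ?thesis by simp
    qed
  qed
  show "\<exists>no. \<forall>t\<ge>no. norm (u t - 0) < r"
  proof (intro exI allI impI)
    fix t assume tN: "N' \<le> t"
    have "sum (\<lambda>s. g s * u s) {..<N'} + sum (\<lambda>s. g s * u s) {N'..<t} = sum (\<lambda>s. g s * u s) {..<t}"
      using tN by (metis sum.atLeastLessThan_concat lessThan_atLeast0 zero_le)
    also have "\<dots> \<le> suminf (\<lambda>t. g t * u t)"
      using su g0 u0 by (intro sum_le_suminf) auto
    finally have "sum (\<lambda>s. g s * u s) {N'..<t} \<le> \<epsilon> * \<epsilon> / C"
      using N[of N'] N' by simp
    then have "(C / \<epsilon>) * sum (\<lambda>s. g s * u s) {N'..<t} \<le> (C / \<epsilon>) * (\<epsilon> * \<epsilon> / C)"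
      using C ep by (intro mult_left_mono) auto
    also have "\<dots> = \<epsilon>" using C ep by (simp add: field_simps)
    finally have "u t \<le> 3 * \<epsilon>" using inv[of "t - N'"] tN by simp
    then show "norm (u t - 0) < r" using u0[of t] ep unfolding \<epsilon>_def by simp
  qed
qed

definition vnorm :: "real ^ 'n::finite \<Rightarrow> real" where
  "vnorm v = Max (range (\<lambda>k. \<bar>v $ k\<bar>))"

lemma vnorm_ge: "\<bar>v $ k\<bar> \<le> vnorm v"
  unfolding vnorm_def by (rule Max_ge) auto

lemma vnorm_le: "(\<And>k. \<bar>v $ k\<bar> \<le> B) \<Longrightarrow> vnorm v \<le> B"
  unfolding vnorm_def by (rule Max.boundedI) auto

lemma vnorm_nonneg: "0 \<le> vnorm v"
  using vnorm_ge[of v] abs_ge_zero order_trans by blast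

lemma Qnorm_ge: "\<bar>Q i a\<bar> \<le> Qnorm (Q :: 's::finite \<Rightarrow> 'a::finite \<Rightarrow> real)"
  unfolding Qnorm_def by (rule Max_ge) (auto intro: image_eqI[where x="(i,a)"])

lemma Qnorm_le: "(\<And>i a. \<bar>Q i a\<bar> \<le> B) \<Longrightarrow> Qnorm (Q :: 's::finite \<Rightarrow> 'a::finite \<Rightarrow> real) \<le> B"
  unfolding Qnorm_def by (rule Max.boundedI) auto

lemma Qnorm_nonneg: "0 \<le> Qnorm (Q :: 's::finite \<Rightarrow> 'a::finite \<Rightarrow> real)"
  using Qnorm_ge[of Q] abs_ge_zero order_trans by blast

lemma vfun_diff: "vnorm (vfun Q - vfun Q') \<le> Qnorm (\<lambda>i a. Q i a - Q' i a)"
proof (rule vnorm_le)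
  fix k
  let ?D = "Qnorm (\<lambda>i a. Q i a - Q' i a)"
  have D: "\<bar>Q k a - Q' k a\<bar> \<le> ?D" for a using Qnorm_ge[of "\<lambda>i a. Q i a - Q' i a" k a] by simp
  have "Min (range (Q k)) \<in> range (Q k)" by (rule Min_in) auto
  then obtain a0 where a0: "Min (range (Q k)) = Q k a0" by (rule rangeE)
  have "Min (range (Q' k)) \<in> range (Q' k)" by (rule Min_in) auto
  then obtain a1 where a1: "Min (range (Q' k)) = Q' k a1" by (rule rangeE)
  have "Min (range (Q' k)) \<le> Q' k a0" by (rule Min_le) auto
  moreover have "Min (range (Q k)) \<le> Q k a1" by (rule Min_le) auto
  ultimately show "\<bar>(vfun Q - vfun Q') $ k\<bar> \<le> ?D"
    unfolding vfun_def using a0 a1 D[of a0] D[of a1] by (simp add: abs_le_iff)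
qed

lemma vfun_norm: "vnorm (vfun Q) \<le> Qnorm Q"
  using vfun_diff[of Q "\<lambda>_ _. 0"] by (simp add: vfun_def vnorm_def)

lemma vfun_comp: "\<bar>vfun Q $ k\<bar> \<le> Qnorm Q"
  using vnorm_ge vfun_norm order_trans by blast

lemma inner_norm1: "\<bar>z \<bullet> v\<bar> \<le> norm1 z * vnorm (v :: real ^ 'n::finite)"
proof -
  have "\<bar>z \<bullet> v\<bar> = \<bar>\<Sum>k\<in>UNIV. z $ k * v $ k\<bar>" by (simp add: inner_vec_def)
  also have "\<dots> \<le> (\<Sum>k\<in>UNIV. \<bar>z $ k\<bar> * vnorm v)"
    by (rule order_trans[OF sum_abs]) (auto intro!: sum_mono mult_left_mono vnorm_ge simp: abs_mult)
  also have "\<dots> = norm1 z * vnorm v" by (simp add: norm1_def sum_distrib_right)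
  finally show ?thesis .
qed

lemma norm1_triangle: "norm1 (x + y) \<le> norm1 x + norm1 (y :: real ^ 'n::finite)"
  unfolding norm1_def by (simp add: sum.distrib[symmetric] sum_mono abs_triangle_ineq)

lemma norm1_nonneg: "0 \<le> norm1 x" unfolding norm1_def by (simp add: sum_nonneg)

lemma norm1_le_norm: "norm1 (x :: real ^ 'n::finite) \<le> real CARD('n) * norm x"
proof -
  have "norm1 x \<le> (\<Sum>k\<in>(UNIV::'n set). norm x)"
    unfolding norm1_def by (intro sum_mono) (metis component_le_norm_cart real_norm_def)
  then show ?thesis by simp
qed

lemma simplex_norm1: "x \<in> prob_simplex \<Longrightarrow> norm1 x = 1"
  unfolding prob_simplex_def norm1_def by simp

lemma supp_bdd:
  assumes "compact S" shows "bdd_above ((\<lambda>s. s \<bullet> v) ` S)"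
proof -
  obtain B where B: "\<forall>x\<in>S. norm x \<le> B" using compact_imp_bounded[OF assms] bounded_iff by blast
  show ?thesis
  proof (rule bdd_aboveI2)
    fix s assume "s \<in> S"
    then have "s \<bullet> v \<le> norm s * norm v" using norm_cauchy_schwarz by blast
    also have "\<dots> \<le> B * norm v" using B \<open>s \<in> S\<close> by (intro mult_right_mono) auto
    finally show "s \<bullet> v \<le> B * norm v" .
  qed
qed

lemma supp_upper: "compact S \<Longrightarrow> s \<in> S \<Longrightarrow> s \<bullet> v \<le> support_fun S v"
  unfolding support_fun_def by (rule cSUP_upper) (auto intro: supp_bdd)

lemma supp_least: "S \<noteq> {} \<Longrightarrow> (\<And>s. s \<in> S \<Longrightarrow> s \<bullet> v \<le> B) \<Longrightarrow> support_fun S v \<le> B"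
  unfolding support_fun_def by (rule cSUP_least) auto

lemma inf_dist_bdd:
  fixes Uhat :: "(real ^ 'n::finite) set"
  assumes U: "U \<noteq> {}" and Uh: "compact Uhat"
  shows "bdd_above ((\<lambda>y. INF x\<in>U. norm1 (y - x)) ` Uhat)"
proof -
  obtain x0 where x0: "x0 \<in> U" using U by blast
  obtain B where B: "\<forall>x\<in>Uhat. norm x \<le> B" using compact_imp_bounded[OF Uh] bounded_iff by blast
  show ?thesis
  proof (rule bdd_aboveI2)
    fix y assume y: "y \<in> Uhat"
    have "(INF x\<in>U. norm1 (y - x)) \<le> norm1 (y - x0)"
      by (rule cINF_lower) (auto intro: x0 bdd_belowI2[where m=0] norm1_nonneg)
    also have "\<dots> \<le> norm1 y + norm1 (- x0)" using norm1_triangle[of y "- x0"] by simp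
    also have "norm1 y \<le> real CARD('n) * B"
    proof -
      have "norm1 y \<le> real CARD('n) * norm y" by (rule norm1_le_norm)
      also have "\<dots> \<le> real CARD('n) * B" using B y by (intro mult_left_mono) auto
      finally show ?thesis .
    qed
    finally show "(INF x\<in>U. norm1 (y - x)) \<le> real CARD('n) * B + norm1 (- x0)" by simp
  qed
qed

lemma beta_nonneg:
  assumes U: "U \<noteq> {}" and Uh: "compact Uhat" "Uhat \<noteq> {}"
  shows "0 \<le> beta_ia Uhat U"
proof -
  obtain y where y: "y \<in> Uhat" using Uh by blast
  have "0 \<le> (INF x\<in>U. norm1 (y - x))" using U by (intro cINF_greatest norm1_nonneg) auto
  also have "\<dots> \<le> beta_ia Uhat U" unfolding beta_ia_def
    by (rule cSUP_upper[OF y inf_dist_bdd[OF U Uh(1)]])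
  finally show ?thesis .
qed

lemma beta_bound:
  assumes U: "U \<noteq> {}" and Uh: "compact Uhat" and y: "y \<in> Uhat" and x: "x \<in> U"
  shows "norm1 (y - x) \<ge> (INF x\<in>U. norm1 (y - x))"
  by (rule cINF_lower) (auto intro: x bdd_belowI2[where m=0] norm1_nonneg)

lemma norm1_shift_bound:
  fixes p :: "real ^ 'n::finite"
  assumes U: "U \<noteq> {}" and Uh: "compact Uhat" and y: "y \<in> Uhat"
    and P: "(\<lambda>x. p + x) ` U \<subseteq> prob_simplex"
  shows "norm1 (p + y) \<le> 1 + beta_ia Uhat U"
proof -
  have "norm1 (p + y) - 1 \<le> (INF x\<in>U. norm1 (y - x))"
  proof (rule cINF_greatest[OF U])
    fix x assume x: "x \<in> U"
    have "norm1 (p + x) = 1" using P x by (intro simplex_norm1) auto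
    moreover have "norm1 (p + y) \<le> norm1 (p + x) + norm1 (y - x)"
      using norm1_triangle[of "p + x" "y - x"] by simp
    ultimately show "norm1 (p + y) - 1 \<le> norm1 (y - x)" by simp
  qed
  also have "\<dots> \<le> beta_ia Uhat U" unfolding beta_ia_def
    by (rule cSUP_upper[OF y inf_dist_bdd[OF U Uh]])
  finally show ?thesis by simp
qed

lemma G_lip:
  fixes p :: "real ^ 'n::finite"
  assumes U: "U \<noteq> {}" and Uh: "compact Uhat" "Uhat \<noteq> {}"
    and P: "(\<lambda>x. p + x) ` U \<subseteq> prob_simplex" and bb: "beta_ia Uhat U \<le> \<beta>"
  shows "support_fun Uhat v + p \<bullet> v \<le> support_fun Uhat w + p \<bullet> w + (1 + \<beta>) * vnorm (v - w)"
proof -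
  have "support_fun Uhat v \<le> support_fun Uhat w + p \<bullet> w - p \<bullet> v + (1 + \<beta>) * vnorm (v - w)"
  proof (rule supp_least[OF Uh(2)])
    fix y assume y: "y \<in> Uhat"
    have n: "norm1 (p + y) \<le> 1 + \<beta>" using norm1_shift_bound[OF U Uh(1) y P] bb by simp
    have "(p + y) \<bullet> (v - w) \<le> norm1 (p + y) * vnorm (v - w)"
      using inner_norm1[of "p + y" "v - w"] by simp
    also have "\<dots> \<le> (1 + \<beta>) * vnorm (v - w)" using n by (intro mult_right_mono vnorm_nonneg)
    finally have a: "(p + y) \<bullet> (v - w) \<le> (1 + \<beta>) * vnorm (v - w)" .
    have b: "y \<bullet> w \<le> support_fun Uhat w" by (rule supp_upper[OF Uh(1) y])
    show "y \<bullet> v \<le> support_fun Uhat w + p \<bullet> w - p \<bullet> v + (1 + \<beta>) * vnorm (v - w)"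
      using a b by (simp add: inner_diff_right inner_add_left algebra_simps)
  qed
  then show ?thesis by simp
qed

lemma gap_lower:
  fixes p :: "real ^ 'n::finite"
  assumes U: "U \<noteq> {}" and Uh: "compact Uhat" and sub: "U \<subseteq> Uhat"
  shows "support_fun ((\<lambda>x. p + x) ` U) v \<le> support_fun Uhat v + p \<bullet> v"
proof (rule supp_least)
  show "(\<lambda>x. p + x) ` U \<noteq> {}" using U by simp
  fix s assume "s \<in> (\<lambda>x. p + x) ` U"
  then obtain x where x: "x \<in> U" "s = p + x" by blast
  have "x \<bullet> v \<le> support_fun Uhat v" using sub x by (intro supp_upper[OF Uh]) auto
  then show "s \<bullet> v \<le> support_fun Uhat v + p \<bullet> v" using x by (simp add: inner_add_left)
qed

lemma gap_upper:
  fixes p :: "real ^ 'n::finite"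
  assumes U: "U \<noteq> {}" "compact U" and Uh: "compact Uhat" "Uhat \<noteq> {}" and bb: "beta_ia Uhat U \<le> \<beta>"
  shows "support_fun Uhat v + p \<bullet> v \<le> support_fun ((\<lambda>x. p + x) ` U) v + \<beta> * vnorm v"
proof -
  let ?H = "support_fun ((\<lambda>x. p + x) ` U) v"
  have cU: "compact ((\<lambda>x. p + x) ` U)" using compact_translation[OF U(2), of p] by simp
  have "support_fun Uhat v \<le> ?H - p \<bullet> v + \<beta> * vnorm v"
  proof (rule supp_least[OF Uh(2)])
    fix y assume y: "y \<in> Uhat"
    have key: "(p + y) \<bullet> v - ?H \<le> norm1 (y - x) * vnorm v" if x: "x \<in> U" for x
    proof -
      have "(p + x) \<bullet> v \<le> ?H" using x by (intro supp_upper[OF cU]) auto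
      moreover have "(y - x) \<bullet> v \<le> norm1 (y - x) * vnorm v" using inner_norm1[of "y - x" v] by simp
      ultimately show ?thesis by (simp add: inner_diff_left inner_add_left algebra_simps)
    qed
    have "(p + y) \<bullet> v - ?H \<le> \<beta> * vnorm v"
    proof (cases "vnorm v = 0")
      case True
      obtain x where "x \<in> U" using U by blast
      then show ?thesis using key[of x] True by simp
    next
      case False
      then have vp: "vnorm v > 0" using vnorm_nonneg[of v] by simp
      have "((p + y) \<bullet> v - ?H) / vnorm v \<le> (INF x\<in>U. norm1 (y - x))"
        using key vp by (intro cINF_greatest[OF U(1)]) (simp add: divide_le_eq)
      also have "\<dots> \<le> beta_ia Uhat U" unfolding beta_ia_def
        by (rule cSUP_upper[OF y inf_dist_bdd[OF U(1) Uh(1)]])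
      finally have "((p + y) \<bullet> v - ?H) / vnorm v \<le> \<beta>" using bb by simp
      then show ?thesis using vp by (simp add: divide_le_eq)
    qed
    then show "y \<bullet> v \<le> ?H - p \<bullet> v + \<beta> * vnorm v" by (simp add: inner_add_left)
  qed
  then show ?thesis by simp
qed

definition Fop :: "('s::finite \<Rightarrow> 'a::finite \<Rightarrow> real) \<Rightarrow> real \<Rightarrow> ('s \<Rightarrow> 'a \<Rightarrow> (real ^ 's) set) \<Rightarrow>
   ('s \<Rightarrow> 'a \<Rightarrow> 's pmf) \<Rightarrow> ('s \<Rightarrow> 'a \<Rightarrow> real) \<Rightarrow> 's \<Rightarrow> 'a \<Rightarrow> real" where
  "Fop c \<theta> Uhat p Q = (\<lambda>i a. c i a + \<theta> * (support_fun (Uhat i a) (vfun Q) + pmf_vec (p i a) \<bullet> vfun Q))"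

lemma Qnorm_sym: "Qnorm (\<lambda>i a. Q i a - Q' i a) = Qnorm (\<lambda>i a. Q' i a - Q i a)"
  unfolding Qnorm_def by (simp add: abs_minus_commute)

lemma F_contr:
  fixes c :: "'s::finite \<Rightarrow> 'a::finite \<Rightarrow> real"
  assumes U_ne: "\<And>i a. U i a \<noteq> {}" and Uh: "\<And>i a. compact (Uhat i a)" "\<And>i a. Uhat i a \<noteq> {}"
    and P: "\<And>i a. (\<lambda>x. pmf_vec (p i a) + x) ` U i a \<subseteq> prob_simplex"
    and bb: "\<And>i a. beta_ia (Uhat i a) (U i a) \<le> \<beta>" and b0: "0 \<le> \<beta>" and th: "0 \<le> \<theta>"
  shows "Qnorm (\<lambda>i a. Fop c \<theta> Uhat p Q i a - Fop c \<theta> Uhat p Q' i a) \<le> \<theta> * (1 + \<beta>) * Qnorm (\<lambda>i a. Q i a - Q' i a)"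
proof (rule Qnorm_le)
  fix i a
  let ?G = "\<lambda>v. support_fun (Uhat i a) v + pmf_vec (p i a) \<bullet> v"
  let ?D = "Qnorm (\<lambda>i a. Q i a - Q' i a)"
  have d1: "vnorm (vfun Q - vfun Q') \<le> ?D" by (rule vfun_diff)
  have d2: "vnorm (vfun Q' - vfun Q) \<le> ?D" using vfun_diff[of Q' Q] Qnorm_sym[of Q Q'] by simp
  have "?G (vfun Q) \<le> ?G (vfun Q') + (1 + \<beta>) * vnorm (vfun Q - vfun Q')"
    by (rule G_lip[OF U_ne Uh P bb])
  also have "(1 + \<beta>) * vnorm (vfun Q - vfun Q') \<le> (1 + \<beta>) * ?D" using d1 b0 by (intro mult_left_mono) auto
  finally have e1: "?G (vfun Q) - ?G (vfun Q') \<le> (1 + \<beta>) * ?D" by simp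
  have "?G (vfun Q') \<le> ?G (vfun Q) + (1 + \<beta>) * vnorm (vfun Q' - vfun Q)"
    by (rule G_lip[OF U_ne Uh P bb])
  also have "(1 + \<beta>) * vnorm (vfun Q' - vfun Q) \<le> (1 + \<beta>) * ?D" using d2 b0 by (intro mult_left_mono) auto
  finally have e2: "?G (vfun Q') - ?G (vfun Q) \<le> (1 + \<beta>) * ?D" by simp
  have "\<bar>?G (vfun Q) - ?G (vfun Q')\<bar> \<le> (1 + \<beta>) * ?D" using e1 e2 by simp
  then have "\<theta> * \<bar>?G (vfun Q) - ?G (vfun Q')\<bar> \<le> \<theta> * ((1 + \<beta>) * ?D)" using th by (intro mult_left_mono) auto
  then show "\<bar>Fop c \<theta> Uhat p Q i a - Fop c \<theta> Uhat p Q' i a\<bar> \<le> \<theta> * (1 + \<beta>) * ?D"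
  proof -
    have "Fop c \<theta> Uhat p Q i a - Fop c \<theta> Uhat p Q' i a = \<theta> * (?G (vfun Q) - ?G (vfun Q'))"
      unfolding Fop_def by (simp add: algebra_simps)
    then show ?thesis using \<open>\<theta> * \<bar>?G (vfun Q) - ?G (vfun Q')\<bar> \<le> \<theta> * ((1 + \<beta>) * ?D)\<close> th
      by (simp add: abs_mult)
  qed
qed

lemma fixpoint:
  fixes F :: "('s::finite \<Rightarrow> 'a::finite \<Rightarrow> real) \<Rightarrow> 's \<Rightarrow> 'a \<Rightarrow> real"
  assumes r: "0 \<le> \<rho>" "\<rho> < 1"
    and contr: "\<And>Q Q'. Qnorm (\<lambda>i a. F Q i a - F Q' i a) \<le> \<rho> * Qnorm (\<lambda>i a. Q i a - Q' i a)"
  shows "\<exists>L. F L = L"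
proof -
  define x where "x n = (F ^^ n) (\<lambda>_ _. 0)" for n
  have xs: "x (Suc n) = F (x n)" for n by (simp add: x_def)
  define d0 where "d0 = Qnorm (\<lambda>i a. x 1 i a - x 0 i a)"
  have d0: "0 \<le> d0" unfolding d0_def by (rule Qnorm_nonneg)
  have dn: "Qnorm (\<lambda>i a. x (Suc n) i a - x n i a) \<le> \<rho> ^ n * d0" for n
  proof (induction n)
    case 0 then show ?case by (simp add: d0_def)
  next
    case (Suc n)
    have "Qnorm (\<lambda>i a. x (Suc (Suc n)) i a - x (Suc n) i a) \<le> \<rho> * Qnorm (\<lambda>i a. x (Suc n) i a - x n i a)"
      unfolding xs[of "Suc n"] xs[of n] by (rule contr)
    also have "\<dots> \<le> \<rho> * (\<rho> ^ n * d0)" using Suc r by (intro mult_left_mono) auto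
    finally show ?case by simp
  qed
  define C where "C = d0 / (1 - \<rho>)"
  have C0: "0 \<le> C" using d0 r by (simp add: C_def)
  have cb: "\<bar>x (n + k) i a - x n i a\<bar> \<le> (1 - \<rho> ^ k) * \<rho> ^ n * C" for n k i a
  proof (induction k)
    case 0 then show ?case by simp
  next
    case (Suc k)
    have "\<bar>x (Suc (n + k)) i a - x (n + k) i a\<bar> \<le> \<rho> ^ (n + k) * d0"
      using Qnorm_ge[of "\<lambda>i a. x (Suc (n + k)) i a - x (n + k) i a" i a] dn[of "n + k"] by simp
    with Suc have "\<bar>x (n + Suc k) i a - x n i a\<bar> \<le> (1 - \<rho> ^ k) * \<rho> ^ n * C + \<rho> ^ (n + k) * d0"
      by simp
    also have "\<dots> = (1 - \<rho> ^ Suc k) * \<rho> ^ n * C"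
      using r unfolding C_def by (simp add: field_simps power_add)
    finally show ?case .
  qed
  have cb2: "\<bar>x m i a - x n i a\<bar> \<le> \<rho> ^ n * C" if "n \<le> m" for m n i a
  proof -
    have "\<bar>x m i a - x n i a\<bar> \<le> (1 - \<rho> ^ (m - n)) * \<rho> ^ n * C" using cb[of n "m - n" i a] that by simp
    also have "\<dots> \<le> 1 * \<rho> ^ n * C" using r C0 by (intro mult_right_mono) auto
    finally show ?thesis by simp
  qed
  have pz: "(\<lambda>n. \<rho> ^ n * C) \<longlonglongrightarrow> 0"
    using LIMSEQ_power_zero[of \<rho>] r by (intro tendsto_mult_left_zero) auto
  have conv: "convergent (\<lambda>n. x n i a)" for i a
  proof (rule Cauchy_convergent, rule metric_CauchyI)
    fix e :: real assume e: "0 < e"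
    obtain M where M: "\<And>n. n \<ge> M \<Longrightarrow> \<rho> ^ n * C < e"
      using pz e unfolding LIMSEQ_def dist_real_def by (metis diff_zero abs_less_iff le_refl)
    show "\<exists>M. \<forall>m\<ge>M. \<forall>n\<ge>M. dist (x m i a) (x n i a) < e"
    proof (intro exI allI impI)
      fix m n assume mn: "M \<le> m" "M \<le> n"
      show "dist (x m i a) (x n i a) < e"
      proof (cases "n \<le> m")
        case True
        then show ?thesis using cb2[OF True, of i a] M[OF mn(2)] by (simp add: dist_real_def)
      next
        case False
        then show ?thesis using cb2[of m n i a] M[OF mn(1)] by (simp add: dist_real_def abs_minus_commute)
      qed
    qed
  qed
  define L where "L i a = lim (\<lambda>n. x n i a)" for i a
  have xL: "(\<lambda>n. x n i a) \<longlonglongrightarrow> L i a" for i a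
    unfolding L_def using conv[of i a] by (simp add: convergent_LIMSEQ_iff)
  have Lb: "\<bar>L i a - x n i a\<bar> \<le> \<rho> ^ n * C" for n i a
  proof -
    have "(\<lambda>m. \<bar>x m i a - x n i a\<bar>) \<longlonglongrightarrow> \<bar>L i a - x n i a\<bar>"
      by (intro tendsto_intros xL)
    moreover have "eventually (\<lambda>m. \<bar>x m i a - x n i a\<bar> \<le> \<rho> ^ n * C) sequentially"
      unfolding eventually_sequentially using cb2 by blast
    ultimately show ?thesis by (rule tendsto_upperbound) simp
  qed
  have "F L i a = L i a" for i a
  proof -
    have b: "\<bar>F L i a - L i a\<bar> \<le> 2 * (\<rho> ^ n * C)" for n
    proof -
      have "Qnorm (\<lambda>i a. L i a - x n i a) \<le> \<rho> ^ n * C" by (rule Qnorm_le) (rule Lb)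
      then have "\<bar>F L i a - F (x n) i a\<bar> \<le> \<rho> * (\<rho> ^ n * C)"
        using Qnorm_ge[of "\<lambda>i a. F L i a - F (x n) i a" i a] contr[of L "x n"] r
        by (meson mult_left_mono order_trans)
      also have "\<dots> \<le> \<rho> ^ n * C" using r C0 by (simp add: mult_left_le_one_le)
      finally have 1: "\<bar>F L i a - F (x n) i a\<bar> \<le> \<rho> ^ n * C" .
      have "\<bar>L i a - x (Suc n) i a\<bar> \<le> \<rho> ^ Suc n * C" by (rule Lb)
      also have "\<dots> \<le> \<rho> ^ n * C" using r C0 by (simp add: mult_left_le_one_le mult.assoc)
      finally have 2: "\<bar>L i a - F (x n) i a\<bar> \<le> \<rho> ^ n * C" by (simp add: xs)
      show ?thesis using 1 2 by simp
    qed
    have "(\<lambda>n. 2 * (\<rho> ^ n * C)) \<longlonglongrightarrow> 0" using pz by (intro tendsto_mult_right_zero)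
    then have "\<bar>F L i a - L i a\<bar> \<le> 0"
      by (rule tendsto_lowerbound) (use b in simp_all)
    then show ?thesis by simp
  qed
  then show ?thesis by blast
qed

lemma final_bound:
  fixes c :: "'s::finite \<Rightarrow> 'a::finite \<Rightarrow> real"
  assumes U_ne: "\<And>i a. U i a \<noteq> {}" and Uc: "\<And>i a. compact (U i a)"
    and Uh: "\<And>i a. compact (Uhat i a)" "\<And>i a. Uhat i a \<noteq> {}"
    and sub: "\<And>i a. U i a \<subseteq> Uhat i a"
    and P: "\<And>i a. (\<lambda>x. pmf_vec (p i a) + x) ` U i a \<subseteq> prob_simplex"
    and bb: "\<And>i a. beta_ia (Uhat i a) (U i a) \<le> \<beta>" and b0: "0 \<le> \<beta>" and th: "0 \<le> \<theta>"
    and rl: "\<theta> * (1 + \<beta>) < 1"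
    and Qf: "Fop c \<theta> Uhat p Qf = Qf"
    and Qstar: "\<And>i a. Qstar i a = c i a + \<theta> * support_fun ((\<lambda>x. pmf_vec (p i a) + x) ` U i a) (vfun Qstar)"
  shows "Qnorm (\<lambda>i a. Qf i a - Qstar i a) \<le> \<theta> * \<beta> / (1 - \<theta> * (1 + \<beta>)) * Qnorm Qstar"
proof -
  let ?d = "Qnorm (\<lambda>i a. Qf i a - Qstar i a)"
  have C: "Qnorm (\<lambda>i a. Fop c \<theta> Uhat p Qf i a - Fop c \<theta> Uhat p Qstar i a) \<le> \<theta> * (1 + \<beta>) * ?d"
    by (rule F_contr[OF U_ne Uh P bb b0 th])
  have "?d \<le> \<theta> * (1 + \<beta>) * ?d + \<theta> * \<beta> * Qnorm Qstar"
  proof (rule Qnorm_le)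
    fix i a
    let ?G = "support_fun (Uhat i a) (vfun Qstar) + pmf_vec (p i a) \<bullet> vfun Qstar"
    let ?H = "support_fun ((\<lambda>x. pmf_vec (p i a) + x) ` U i a) (vfun Qstar)"
    have g1: "?H \<le> ?G" by (rule gap_lower[OF U_ne Uh(1) sub])
    have g2: "?G \<le> ?H + \<beta> * vnorm (vfun Qstar)" by (rule gap_upper[OF U_ne Uc Uh bb])
    have "\<beta> * vnorm (vfun Qstar) \<le> \<beta> * Qnorm Qstar" using b0 vfun_norm[of Qstar] by (intro mult_left_mono)
    then have gg: "\<bar>?G - ?H\<bar> \<le> \<beta> * Qnorm Qstar" using g1 g2 by simp
    have e: "Fop c \<theta> Uhat p Qstar i a - Qstar i a = \<theta> * (?G - ?H)"
      unfolding Fop_def using Qstar[of i a] by (simp add: algebra_simps)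
    have "\<bar>Fop c \<theta> Uhat p Qstar i a - Qstar i a\<bar> \<le> \<theta> * (\<beta> * Qnorm Qstar)"
      unfolding e abs_mult using th gg by (simp add: mult_left_mono)
    moreover have "\<bar>Fop c \<theta> Uhat p Qf i a - Fop c \<theta> Uhat p Qstar i a\<bar> \<le> \<theta> * (1 + \<beta>) * ?d"
      using Qnorm_ge[of "\<lambda>i a. Fop c \<theta> Uhat p Qf i a - Fop c \<theta> Uhat p Qstar i a" i a] C by simp
    moreover have "Qf i a = Fop c \<theta> Uhat p Qf i a" using Qf by simp
    ultimately show "\<bar>Qf i a - Qstar i a\<bar> \<le> \<theta> * (1 + \<beta>) * ?d + \<theta> * \<beta> * Qnorm Qstar"
      by (simp add: abs_le_iff) 
  qed
  then have "?d * (1 - \<theta> * (1 + \<beta>)) \<le> \<theta> * \<beta> * Qnorm Qstar" by (simp add: algebra_simps)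
  then show ?thesis using rl by (simp add: pos_le_divide_eq field_simps)
qed

primrec Zp :: "(nat \<Rightarrow> real) \<Rightarrow> (nat \<Rightarrow> real) \<Rightarrow> nat \<Rightarrow> real" where
  "Zp g E 0 = 0"
| "Zp g E (Suc t) = (1 - g t) * Zp g E t + g t * E t"

lemma sum_bound:
  fixes a b :: "'n::finite \<Rightarrow> real"
  assumes "\<And>k. \<bar>a k\<bar> \<le> A" "\<And>k. \<bar>b k\<bar> \<le> B"
  shows "\<bar>\<Sum>k\<in>UNIV. a k * b k\<bar> \<le> real CARD('n) * A * B"
proof -
  have "\<bar>\<Sum>k\<in>UNIV. a k * b k\<bar> \<le> (\<Sum>k\<in>(UNIV::'n set). A * B)"
  proof (rule order_trans[OF sum_abs], rule sum_mono)
    fix k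
    have "\<bar>a k\<bar> * \<bar>b k\<bar> \<le> A * B" using assms[of k] by (intro mult_mono) auto
    then show "\<bar>a k * b k\<bar> \<le> A * B" by (simp add: abs_mult)
  qed
  then show ?thesis by simp
qed

lemma ident:
  fixes g th :: real and vt vs :: "real ^ 'n::finite" and Zt Et :: "'n \<Rightarrow> real"
  assumes that: "Qs = (1 - g) * Qt + g * (FQ + th * (\<Sum>k\<in>UNIV. vt $ k * Et k))"
  shows "(Qs - th * (\<Sum>k\<in>UNIV. vs $ k * ((1 - g) * Zt k + g * Et k))) - Qf
     = (1 - g) * ((Qt - th * (\<Sum>k\<in>UNIV. vt $ k * Zt k)) - Qf) + g * (FQ - Qf)
       + th * g * (\<Sum>k\<in>UNIV. (vt $ k - vs $ k) * Et k) + th * (1 - g) * (\<Sum>k\<in>UNIV. (vt $ k - vs $ k) * Zt k)"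
proof -
  have 1: "(\<Sum>k\<in>UNIV. vs $ k * ((1 - g) * Zt k + g * Et k)) = (1 - g) * (\<Sum>k\<in>UNIV. vs $ k * Zt k) + g * (\<Sum>k\<in>UNIV. vs $ k * Et k)"
    by (simp add: distrib_left sum.distrib sum_distrib_left mult.left_commute)
  have 2: "(\<Sum>k\<in>UNIV. (vt $ k - vs $ k) * Et k) = (\<Sum>k\<in>UNIV. vt $ k * Et k) - (\<Sum>k\<in>UNIV. vs $ k * Et k)"
    by (simp add: left_diff_distrib sum_subtractf)
  have 3: "(\<Sum>k\<in>UNIV. (vt $ k - vs $ k) * Zt k) = (\<Sum>k\<in>UNIV. vt $ k * Zt k) - (\<Sum>k\<in>UNIV. vs $ k * Zt k)"
    by (simp add: left_diff_distrib sum_subtractf)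
  show ?thesis unfolding 1 2 3 that by (simp add: algebra_simps)
qed

lemma sum3_ge:
  fixes f :: "'s::finite \<Rightarrow> 'a::finite \<Rightarrow> 'n::finite \<Rightarrow> real"
  assumes "\<And>i a k. 0 \<le> f i a k"
  shows "f i a k \<le> (\<Sum>i\<in>UNIV. \<Sum>a\<in>UNIV. \<Sum>k\<in>UNIV. f i a k)"
proof -
  have "f i a k \<le> (\<Sum>k\<in>UNIV. f i a k)" by (rule member_le_sum) (auto intro: assms)
  also have "\<dots> \<le> (\<Sum>a\<in>UNIV. \<Sum>k\<in>UNIV. f i a k)"
    by (rule member_le_sum[where f="\<lambda>a. \<Sum>k\<in>UNIV. f i a k"]) (auto intro: assms sum_nonneg)
  also have "\<dots> \<le> (\<Sum>i\<in>UNIV. \<Sum>a\<in>UNIV. \<Sum>k\<in>UNIV. f i a k)"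
    by (rule member_le_sum[where f="\<lambda>i. \<Sum>a\<in>UNIV. \<Sum>k\<in>UNIV. f i a k"]) (auto intro: assms sum_nonneg)
  finally show ?thesis .
qed

lemma pathwise:
  fixes F :: "('s::finite \<Rightarrow> 'a::finite \<Rightarrow> real) \<Rightarrow> 's \<Rightarrow> 'a \<Rightarrow> real"
    and Q :: "nat \<Rightarrow> 's \<Rightarrow> 'a \<Rightarrow> real" and E :: "nat \<Rightarrow> 's \<Rightarrow> 'a \<Rightarrow> 's \<Rightarrow> real" and g :: "nat \<Rightarrow> real"
  assumes r: "0 \<le> \<rho>" "\<rho> < 1"
    and contr: "\<And>Q Q'. Qnorm (\<lambda>i a. F Q i a - F Q' i a) \<le> \<rho> * Qnorm (\<lambda>i a. Q i a - Q' i a)"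
    and fp: "F Qf = Qf" and th: "0 \<le> \<theta>"
    and rec: "\<And>t i a. Q (Suc t) i a = (1 - g t) * Q t i a + g t * (F (Q t) i a + \<theta> * (\<Sum>k\<in>UNIV. vfun (Q t) $ k * E t i a k))"
    and Eb: "\<And>t i a k. \<bar>E t i a k\<bar> \<le> 1"
    and g0: "\<And>t. 0 \<le> g t" and ns: "\<not> summable g" and gl: "g \<longlonglongrightarrow> 0"
    and Zl: "\<And>i a k. (\<lambda>t. Zp g (\<lambda>s. E s i a k) t) \<longlonglongrightarrow> 0"
  shows "(\<lambda>t. Q t i a) \<longlonglongrightarrow> Qf i a"
proof -
  define Z where "Z t i a k = Zp g (\<lambda>s. E s i a k) t" for t i a k
  define z where "z t = (\<Sum>i\<in>UNIV. \<Sum>a\<in>UNIV. \<Sum>k\<in>UNIV. \<bar>Z t i a k\<bar>)" for t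
  define N where "N = real CARD('s)"
  define qn where "qn t = Qnorm (Q t)" for t
  define v where "v t = vfun (Q t)" for t
  define R where "R t i a = Q t i a - \<theta> * (\<Sum>k\<in>UNIV. v t $ k * Z t i a k)" for t i a
  define x where "x t = Qnorm (\<lambda>i a. R t i a - Qf i a)" for t
  define F0 where "F0 = Qnorm (F (\<lambda>_ _. 0))"
  define c1 where "c1 = \<rho> + 1 + \<theta> * N"
  define M1 where "M1 = max F0 c1"
  define K where "K = \<theta> * N * 2 * M1"
  define \<delta> where "\<delta> t = K * (z t + g t)" for t
  define Qfn where "Qfn = Qnorm Qf"
  define \<kappa> where "\<kappa> = (1 - \<rho>) / 2"
  have N0: "0 \<le> N" unfolding N_def by simp
  have qn0: "0 \<le> qn t" for t unfolding qn_def by (rule Qnorm_nonneg)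
  have x0: "0 \<le> x t" for t unfolding x_def by (rule Qnorm_nonneg)
  have F00: "0 \<le> F0" unfolding F0_def by (rule Qnorm_nonneg)
  have Qfn0: "0 \<le> Qfn" unfolding Qfn_def by (rule Qnorm_nonneg)
  have c1p: "\<rho> \<le> c1" "0 \<le> c1" using th N0 r by (auto simp: c1_def)
  have M1: "F0 \<le> M1" "c1 \<le> M1" "\<rho> \<le> M1" "0 \<le> M1" using c1p F00 by (auto simp: M1_def)
  have K0: "0 \<le> K" using th N0 M1 by (simp add: K_def)
  have kp: "0 < \<kappa>" using r by (simp add: \<kappa>_def)
  have Zle: "\<bar>Z t i a k\<bar> \<le> z t" for t i a k
    unfolding z_def by (rule sum3_ge[of "\<lambda>i a k. \<bar>Z t i a k\<bar>"]) simp
  have z0: "0 \<le> z t" for t using Zle[of t] abs_ge_zero order_trans by blast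
  have zl: "z \<longlonglongrightarrow> 0"
    unfolding z_def
    by (intro tendsto_null_sum) (simp add: Z_def tendsto_rabs_zero_iff Zl)
  have vb: "\<bar>v t $ k\<bar> \<le> qn t" for t k unfolding v_def qn_def by (rule vfun_comp)
  have Zrec: "Z (Suc t) i a k = (1 - g t) * Z t i a k + g t * E t i a k" for t i a k
    by (simp add: Z_def)
  have A: "\<bar>Q t i a - R t i a\<bar> \<le> \<theta> * N * qn t * z t" for t i a
  proof -
    have "\<bar>\<Sum>k\<in>UNIV. v t $ k * Z t i a k\<bar> \<le> N * qn t * z t"
      unfolding N_def by (rule sum_bound) (auto intro: vb Zle)
    then have "\<theta> * \<bar>\<Sum>k\<in>UNIV. v t $ k * Z t i a k\<bar> \<le> \<theta> * (N * qn t * z t)"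
      using th by (intro mult_left_mono)
    then show ?thesis unfolding R_def using th by (simp add: abs_mult mult.assoc)
  qed
  have AQ: "Qnorm (\<lambda>i a. Q t i a - R t i a) \<le> \<theta> * N * qn t * z t" for t
    by (rule Qnorm_le) (rule A)
  have Fb: "\<bar>F P i a\<bar> \<le> F0 + \<rho> * Qnorm P" for P i a
  proof -
    have "\<bar>F P i a - F (\<lambda>_ _. 0) i a\<bar> \<le> \<rho> * Qnorm P"
      using Qnorm_ge[of "\<lambda>i a. F P i a - F (\<lambda>_ _. 0) i a" i a] contr[of P "\<lambda>_ _. 0"] by simp
    moreover have "\<bar>F (\<lambda>_ _. 0) i a\<bar> \<le> F0" unfolding F0_def by (rule Qnorm_ge)
    ultimately show ?thesis by simp
  qed
  have B: "\<bar>Q (Suc t) i a - Q t i a\<bar> \<le> g t * (F0 + c1 * qn t)" for t i a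
  proof -
    have s: "\<bar>\<Sum>k\<in>UNIV. vfun (Q t) $ k * E t i a k\<bar> \<le> N * qn t * 1"
      unfolding N_def using vb Eb unfolding v_def by (intro sum_bound) auto
    have "\<bar>F (Q t) i a - Q t i a + \<theta> * (\<Sum>k\<in>UNIV. vfun (Q t) $ k * E t i a k)\<bar>
        \<le> \<bar>F (Q t) i a\<bar> + \<bar>Q t i a\<bar> + \<theta> * \<bar>\<Sum>k\<in>UNIV. vfun (Q t) $ k * E t i a k\<bar>"
      using th abs_mult[of \<theta> "\<Sum>k\<in>UNIV. vfun (Q t) $ k * E t i a k"] by (smt (verit))
    also have "\<dots> \<le> (F0 + \<rho> * qn t) + qn t + \<theta> * (N * qn t * 1)"
      using Fb[of "Q t" i a] Qnorm_ge[of "Q t" i a] s th unfolding qn_def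
      by (intro add_mono mult_left_mono) auto
    also have "\<dots> = F0 + c1 * qn t" by (simp add: c1_def algebra_simps)
    finally have "\<bar>F (Q t) i a - Q t i a + \<theta> * (\<Sum>k\<in>UNIV. vfun (Q t) $ k * E t i a k)\<bar> \<le> F0 + c1 * qn t" .
    moreover have "Q (Suc t) i a - Q t i a = g t * (F (Q t) i a - Q t i a + \<theta> * (\<Sum>k\<in>UNIV. vfun (Q t) $ k * E t i a k))"
      by (simp add: rec algebra_simps)
    ultimately show ?thesis using g0[of t] by (simp add: abs_mult mult_left_mono)
  qed
  have Bv: "\<bar>v t $ k - v (Suc t) $ k\<bar> \<le> g t * (F0 + c1 * qn t)" for t k
  proof -
    have "vnorm (vfun (Q (Suc t)) - vfun (Q t)) \<le> Qnorm (\<lambda>i a. Q (Suc t) i a - Q t i a)" by (rule vfun_diff)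
    also have "\<dots> \<le> g t * (F0 + c1 * qn t)" by (rule Qnorm_le) (rule B)
    finally show ?thesis using vnorm_ge[of "vfun (Q (Suc t)) - vfun (Q t)" k]
      unfolding v_def by (simp add: abs_minus_commute)
  qed
  have D: "x (Suc t) \<le> (1 - g t * (1 - \<rho>)) * x t + g t * \<delta> t * (1 + qn t)" if gt1: "g t \<le> 1" for t
  proof -
  have "Qnorm (\<lambda>i a. R (Suc t) i a - Qf i a) \<le> (1 - g t * (1 - \<rho>)) * x t + g t * \<delta> t * (1 + qn t)"
  proof (rule Qnorm_le)
    fix i a
    let ?g = "g t"
    have gt0: "0 \<le> ?g" by (rule g0)
    have id: "R (Suc t) i a - Qf i a = (1 - ?g) * (R t i a - Qf i a) + ?g * (F (Q t) i a - Qf i a)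
       + \<theta> * ?g * (\<Sum>k\<in>UNIV. (v t $ k - v (Suc t) $ k) * E t i a k)
       + \<theta> * (1 - ?g) * (\<Sum>k\<in>UNIV. (v t $ k - v (Suc t) $ k) * Z t i a k)"
      unfolding R_def Zrec
      by (rule ident) (simp add: rec v_def)
    have t1: "\<bar>R t i a - Qf i a\<bar> \<le> x t" unfolding x_def by (rule Qnorm_ge[of "\<lambda>i a. R t i a - Qf i a"])
    have t2: "\<bar>F (Q t) i a - Qf i a\<bar> \<le> \<rho> * (\<theta> * N * qn t * z t) + \<rho> * x t"
    proof -
      have "\<bar>F (Q t) i a - F (R t) i a\<bar> \<le> \<rho> * Qnorm (\<lambda>i a. Q t i a - R t i a)"
        using Qnorm_ge[of "\<lambda>i a. F (Q t) i a - F (R t) i a" i a] contr[of "Q t" "R t"] by simp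
      also have "\<dots> \<le> \<rho> * (\<theta> * N * qn t * z t)" using AQ[of t] r by (intro mult_left_mono) auto
      finally have 1: "\<bar>F (Q t) i a - F (R t) i a\<bar> \<le> \<rho> * (\<theta> * N * qn t * z t)" .
      have 2: "\<bar>F (R t) i a - F Qf i a\<bar> \<le> \<rho> * x t"
        using Qnorm_ge[of "\<lambda>i a. F (R t) i a - F Qf i a" i a] contr[of "R t" Qf] unfolding x_def by simp
      show ?thesis using 1 2 fp by simp
    qed
    have t3: "\<bar>\<Sum>k\<in>UNIV. (v t $ k - v (Suc t) $ k) * E t i a k\<bar> \<le> N * (?g * (F0 + c1 * qn t)) * 1"
      unfolding N_def by (rule sum_bound) (auto intro: Bv Eb)
    have t4: "\<bar>\<Sum>k\<in>UNIV. (v t $ k - v (Suc t) $ k) * Z t i a k\<bar> \<le> N * (?g * (F0 + c1 * qn t)) * z t"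
      unfolding N_def by (rule sum_bound) (auto intro: Bv Zle)
    define Bt where "Bt = F0 + c1 * qn t"
    have Bt: "0 \<le> Bt" "Bt \<le> M1 * (1 + qn t)" using F00 c1p qn0[of t] M1
      by (auto simp: Bt_def algebra_simps intro!: add_mono mult_right_mono)
    have "\<bar>R (Suc t) i a - Qf i a\<bar> \<le> (1 - ?g) * x t + ?g * (\<rho> * (\<theta> * N * qn t * z t) + \<rho> * x t)
        + \<theta> * ?g * (N * (?g * Bt) * 1) + \<theta> * (1 - ?g) * (N * (?g * Bt) * z t)"
    proof -
      let ?A1 = "R t i a - Qf i a" and ?A2 = "F (Q t) i a - Qf i a"
        and ?S3 = "\<Sum>k\<in>UNIV. (v t $ k - v (Suc t) $ k) * E t i a k"
        and ?S4 = "\<Sum>k\<in>UNIV. (v t $ k - v (Suc t) $ k) * Z t i a k"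
      have g1: "0 \<le> 1 - ?g" using gt1 by simp
      have "\<bar>R (Suc t) i a - Qf i a\<bar> \<le> \<bar>(1 - ?g) * ?A1\<bar> + \<bar>?g * ?A2\<bar> + \<bar>\<theta> * ?g * ?S3\<bar> + \<bar>\<theta> * (1 - ?g) * ?S4\<bar>"
        unfolding id by linarith
      also have "\<dots> = (1 - ?g) * \<bar>?A1\<bar> + ?g * \<bar>?A2\<bar> + (\<theta> * ?g) * \<bar>?S3\<bar> + (\<theta> * (1 - ?g)) * \<bar>?S4\<bar>"
        using g1 gt0 th by (simp add: abs_mult)
      also have "\<dots> \<le> (1 - ?g) * x t + ?g * (\<rho> * (\<theta> * N * qn t * z t) + \<rho> * x t)
        + (\<theta> * ?g) * (N * (?g * Bt) * 1) + (\<theta> * (1 - ?g)) * (N * (?g * Bt) * z t)"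
        using g1 gt0 th t1 t2 t3 t4 unfolding Bt_def
        by (intro add_mono mult_left_mono mult_nonneg_nonneg) auto
      finally show ?thesis by (simp add: mult.assoc)
    qed
    also have "\<dots> = (1 - ?g * (1 - \<rho>)) * x t + ?g * (\<theta> * N * (\<rho> * qn t * z t + ?g * Bt + (1 - ?g) * Bt * z t))"
      by (simp add: algebra_simps)
    finally have L: "\<bar>R (Suc t) i a - Qf i a\<bar> \<le> (1 - ?g * (1 - \<rho>)) * x t + ?g * (\<theta> * N * (\<rho> * qn t * z t + ?g * Bt + (1 - ?g) * Bt * z t))" .
    have "\<theta> * N * (\<rho> * qn t * z t + ?g * Bt + (1 - ?g) * Bt * z t) \<le> \<delta> t * (1 + qn t)"
    proof -
      have a: "\<rho> * qn t * z t \<le> M1 * (1 + qn t) * z t"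
        using M1 qn0[of t] z0[of t] by (intro mult_right_mono mult_mono) auto
      have b: "?g * Bt \<le> ?g * (M1 * (1 + qn t))" using Bt gt0 by (intro mult_left_mono) auto
      have c: "(1 - ?g) * Bt * z t \<le> 1 * (M1 * (1 + qn t)) * z t"
        using Bt gt0 gt1 z0[of t] by (intro mult_right_mono mult_mono) auto
      have "\<rho> * qn t * z t + ?g * Bt + (1 - ?g) * Bt * z t \<le> 2 * M1 * (z t + ?g) * (1 + qn t)"
      proof -
        have "\<rho> * qn t * z t + ?g * Bt + (1 - ?g) * Bt * z t
            \<le> M1 * (1 + qn t) * z t + ?g * (M1 * (1 + qn t)) + 1 * (M1 * (1 + qn t)) * z t"
          using a b c by (rule add_mono[OF add_mono])
        moreover have "0 \<le> M1 * (1 + qn t) * ?g" using M1 qn0[of t] gt0 by simp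
        ultimately show ?thesis by (simp add: algebra_simps)
      qed
      then have "\<theta> * N * (\<rho> * qn t * z t + ?g * Bt + (1 - ?g) * Bt * z t) \<le> \<theta> * N * (2 * M1 * (z t + ?g) * (1 + qn t))"
        using th N0 by (intro mult_left_mono) auto
      then show ?thesis by (simp add: \<delta>_def K_def algebra_simps)
    qed
    then have "?g * (\<theta> * N * (\<rho> * qn t * z t + ?g * Bt + (1 - ?g) * Bt * z t)) \<le> ?g * (\<delta> t * (1 + qn t))"
      using gt0 by (intro mult_left_mono)
    with L show "\<bar>R (Suc t) i a - Qf i a\<bar> \<le> (1 - ?g * (1 - \<rho>)) * x t + ?g * \<delta> t * (1 + qn t)"
      by (simp add: mult.assoc)
  qed
  then show ?thesis by (simp add: x_def)
  qed
  have Eq: "qn t \<le> 2 * (x t + Qfn)" if "\<theta> * N * z t \<le> 1/2" for t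
  proof -
    have "qn t \<le> x t + Qfn + \<theta> * N * qn t * z t"
      unfolding qn_def
    proof (rule Qnorm_le)
      fix i a
      have "\<bar>R t i a - Qf i a\<bar> \<le> x t" unfolding x_def by (rule Qnorm_ge[of "\<lambda>i a. R t i a - Qf i a"])
      moreover have "\<bar>Qf i a\<bar> \<le> Qfn" unfolding Qfn_def by (rule Qnorm_ge)
      moreover note A[of t i a]
      ultimately show "\<bar>Q t i a\<bar> \<le> x t + Qfn + \<theta> * N * Qnorm (Q t) * z t"
        unfolding qn_def by linarith
    qed
    moreover have "\<theta> * N * qn t * z t \<le> qn t / 2"
      using mult_left_mono[OF that qn0[of t]] by (simp add: algebra_simps)
    ultimately show ?thesis by simp
  qed
  have dl: "\<delta> \<longlonglongrightarrow> 0" unfolding \<delta>_def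
    using zl gl by (intro tendsto_mult_right_zero) (simp add: tendsto_add_zero)
  have ev1: "eventually (\<lambda>t. g t \<le> 1) sequentially"
    using order_tendstoD(2)[OF gl, of 1] by (auto elim: eventually_mono)
  have "(\<lambda>t. \<theta> * N * z t) \<longlonglongrightarrow> 0" using zl by (intro tendsto_mult_right_zero)
  then have ev2: "eventually (\<lambda>t. \<theta> * N * z t \<le> 1/2) sequentially"
    by (rule eventually_mono[OF order_tendstoD(2)[where a="1/2"]]) auto
  have ev3: "eventually (\<lambda>t. 2 * \<delta> t \<le> \<kappa>) sequentially"
  proof -
    have l2: "(\<lambda>t. 2 * \<delta> t) \<longlonglongrightarrow> 0" using dl by (intro tendsto_mult_right_zero)
    show ?thesis using order_tendstoD(2)[OF l2, of \<kappa>] kp by (auto elim: eventually_mono)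
  qed
  define e where "e t = \<delta> t * (1 + 2 * Qfn) / \<kappa>" for t
  have el: "e \<longlonglongrightarrow> 0" unfolding e_def using dl by (intro tendsto_divide_zero tendsto_mult_left_zero)
  have d0: "0 \<le> \<delta> t" for t using K0 z0[of t] g0[of t] by (simp add: \<delta>_def)
  have "eventually (\<lambda>t. 0 \<le> x t \<and> \<kappa> * g t \<le> 1 \<and> x (Suc t) \<le> (1 - \<kappa> * g t) * x t + \<kappa> * g t * e t) sequentially"
    using ev1 ev2 ev3
  proof eventually_elim
    case (elim t)
    have kg: "\<kappa> * g t \<le> 1"
    proof -
      have "\<kappa> \<le> 1" using r by (simp add: \<kappa>_def)
      then show ?thesis using elim g0[of t] kp by (metis mult_le_one less_imp_le)
    qed
    have "x (Suc t) \<le> (1 - g t * (1 - \<rho>)) * x t + g t * \<delta> t * (1 + qn t)" using D elim by blast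
    also have "g t * \<delta> t * (1 + qn t) \<le> g t * \<delta> t * (1 + 2 * (x t + Qfn))"
      using Eq[of t] elim g0[of t] d0[of t] by (intro mult_left_mono) auto
    also have "(1 - g t * (1 - \<rho>)) * x t + g t * \<delta> t * (1 + 2 * (x t + Qfn))
        = (1 - g t * (1 - \<rho>) + 2 * g t * \<delta> t) * x t + g t * \<delta> t * (1 + 2 * Qfn)"
      by (simp add: algebra_simps)
    also have "(1 - g t * (1 - \<rho>) + 2 * g t * \<delta> t) * x t \<le> (1 - \<kappa> * g t) * x t"
    proof (rule mult_right_mono[OF _ x0])
      have h: "g t * (2 * \<delta> t) \<le> g t * \<kappa>" using elim g0[of t] by (intro mult_left_mono) auto
      have e: "g t * (1 - \<rho>) = 2 * (g t * \<kappa>)" by (simp add: \<kappa>_def)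
      have e2: "2 * g t * \<delta> t = g t * (2 * \<delta> t)" by simp
      show "1 - g t * (1 - \<rho>) + 2 * g t * \<delta> t \<le> 1 - \<kappa> * g t"
        unfolding e e2 using h by (simp add: mult.commute)
    qed
    also have "g t * \<delta> t * (1 + 2 * Qfn) = \<kappa> * g t * e t"
      using kp by (simp add: e_def)
    finally show ?case using x0 kg by simp
  qed
  then have xl: "x \<longlonglongrightarrow> 0" by (rule L1[OF kp g0 ns el])
  have "(\<lambda>t. Q t i a - Qf i a) \<longlonglongrightarrow> 0"
  proof (rule Lim_null_comparison)
    show "eventually (\<lambda>t. norm (Q t i a - Qf i a) \<le> x t + \<theta> * N * z t * (2 * (x t + Qfn))) sequentially"
      using ev2
    proof eventually_elim
      case (elim t)
      have "\<bar>R t i a - Qf i a\<bar> \<le> x t" unfolding x_def by (rule Qnorm_ge[of "\<lambda>i a. R t i a - Qf i a"])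
      moreover have "\<theta> * N * qn t * z t \<le> \<theta> * N * z t * (2 * (x t + Qfn))"
      proof -
        have "(\<theta> * N * z t) * qn t \<le> (\<theta> * N * z t) * (2 * (x t + Qfn))"
          using Eq[OF elim] th N0 z0[of t] by (intro mult_left_mono) auto
        then show ?thesis by (simp add: mult_ac)
      qed
      moreover note A[of t i a]
      ultimately show ?case by simp
    qed
    show "(\<lambda>t. x t + \<theta> * N * z t * (2 * (x t + Qfn))) \<longlonglongrightarrow> 0"
    proof -
      have "(\<lambda>t. x t + \<theta> * N * z t * (2 * (x t + Qfn))) \<longlonglongrightarrow> 0 + \<theta> * N * 0 * (2 * (0 + Qfn))"
        by (intro tendsto_intros xl zl)
      then show ?thesis by simp
    qed
  qed
  then show ?thesis by (simp add: LIM_zero_iff)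
qed

lemma Zp_meas[measurable]:
  assumes [measurable]: "\<And>t. E t \<in> borel_measurable M"
  shows "(\<lambda>\<omega>. Zp g (\<lambda>s. E s \<omega>) t) \<in> borel_measurable M"
  by (induction t) simp_all

lemma Zp_bdd:
  assumes Eb: "\<And>t \<omega>. \<bar>E t \<omega>\<bar> \<le> 1"
  shows "\<exists>B. \<forall>\<omega>. \<bar>Zp g (\<lambda>s. E s \<omega>) t\<bar> \<le> B"
proof (induction t)
  case 0 then show ?case by auto
next
  case (Suc t)
  then obtain B where B: "\<And>\<omega>. \<bar>Zp g (\<lambda>s. E s \<omega>) t\<bar> \<le> B" by blast
  have "\<bar>Zp g (\<lambda>s. E s \<omega>) (Suc t)\<bar> \<le> \<bar>1 - g t\<bar> * B + \<bar>g t\<bar> * 1" for \<omega>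
  proof -
    have "\<bar>Zp g (\<lambda>s. E s \<omega>) (Suc t)\<bar> \<le> \<bar>1 - g t\<bar> * \<bar>Zp g (\<lambda>s. E s \<omega>) t\<bar> + \<bar>g t\<bar> * \<bar>E t \<omega>\<bar>"
      by (simp add: abs_mult[symmetric] abs_triangle_ineq)
    also have "\<dots> \<le> \<bar>1 - g t\<bar> * B + \<bar>g t\<bar> * 1"
      by (intro add_mono mult_left_mono B Eb) auto
    finally show ?thesis .
  qed
  then show ?case by blast
qed

lemma (in prob_space) Zp_AE:
  fixes E :: "nat \<Rightarrow> 'a \<Rightarrow> real" and g :: "nat \<Rightarrow> real"
  assumes meas[measurable]: "\<And>t. E t \<in> borel_measurable M"
    and Eb: "\<And>t \<omega>. \<bar>E t \<omega>\<bar> \<le> 1"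
    and orth: "\<And>s r. s < r \<Longrightarrow> (\<integral>\<omega>. E s \<omega> * E r \<omega> \<partial>M) = 0"
    and g0: "\<And>t. 0 \<le> g t" and ns: "\<not> summable g" and gl: "g \<longlonglongrightarrow> 0"
    and gsq: "summable (\<lambda>t. (g t)\<^sup>2)"
  shows "AE \<omega> in M. (\<lambda>t. Zp g (\<lambda>s. E s \<omega>) t) \<longlonglongrightarrow> 0"
proof -
  define Z where "Z t \<omega> = Zp g (\<lambda>s. E s \<omega>) t" for t \<omega>
  have Zm[measurable]: "Z t \<in> borel_measurable M" for t unfolding Z_def by measurable
  have Zs: "Z (Suc t) \<omega> = (1 - g t) * Z t \<omega> + g t * E t \<omega>" for t \<omega> by (simp add: Z_def)
  have bdd_int: "integrable M f" if "f \<in> borel_measurable M" "\<And>\<omega>. \<bar>f \<omega>\<bar> \<le> B" for B and f :: "'a \<Rightarrow> real"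
    using that by (intro integrable_const_bound[where B=B] AE_I2) auto
  have "\<forall>t. \<exists>B. \<forall>\<omega>. \<bar>Z t \<omega>\<bar> \<le> B" unfolding Z_def using Zp_bdd[of E, OF Eb] by blast
  then obtain BZ where BZ: "\<And>\<omega>. \<bar>Z t \<omega>\<bar> \<le> BZ t" for t
    by (metis choice)
  have BZ0: "0 \<le> BZ t" for t using BZ[of t undefined] abs_ge_zero order_trans by blast
  have iE: "integrable M (\<lambda>\<omega>. E s \<omega> * E r \<omega>)" for s r
  proof (rule bdd_int[of _ 1])
    show "\<bar>E s \<omega> * E r \<omega>\<bar> \<le> 1" for \<omega> using mult_le_one[OF Eb abs_ge_zero Eb] by (simp add: abs_mult)
  qed simp
  have iZE: "integrable M (\<lambda>\<omega>. Z t \<omega> * E r \<omega>)" for t r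
  proof (rule bdd_int[of _ "BZ t * 1"])
    show "\<bar>Z t \<omega> * E r \<omega>\<bar> \<le> BZ t * 1" for \<omega>
      using mult_mono[OF BZ Eb BZ0 abs_ge_zero] by (simp add: abs_mult)
  qed simp
  have iZZ: "integrable M (\<lambda>\<omega>. (Z t \<omega>)\<^sup>2)" for t
  proof (rule bdd_int[of _ "BZ t * BZ t"])
    show "\<bar>(Z t \<omega>)\<^sup>2\<bar> \<le> BZ t * BZ t" for \<omega>
      using mult_mono[OF BZ[of t \<omega>] BZ[of t \<omega>] BZ0 abs_ge_zero] by (simp add: abs_mult[symmetric] power2_eq_square)
  qed simp
  have iEE: "integrable M (\<lambda>\<omega>. (E t \<omega>)\<^sup>2)" for t
  proof (rule bdd_int[of _ 1])
    show "\<bar>(E t \<omega>)\<^sup>2\<bar> \<le> 1" for \<omega> using mult_le_one[OF Eb[of t \<omega>] abs_ge_zero Eb[of t \<omega>]] by (simp add: abs_mult[symmetric] power2_eq_square)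
  qed simp
  have ZE0: "t \<le> r \<longrightarrow> (\<integral>\<omega>. Z t \<omega> * E r \<omega> \<partial>M) = 0" for t r
  proof (induction t)
    case 0 then show ?case by (simp add: Z_def)
  next
    case (Suc t)
    show ?case
    proof
      assume tr: "Suc t \<le> r"
      have "(\<integral>\<omega>. Z (Suc t) \<omega> * E r \<omega> \<partial>M) = (\<integral>\<omega>. (1 - g t) * (Z t \<omega> * E r \<omega>) + g t * (E t \<omega> * E r \<omega>) \<partial>M)"
        by (simp add: Zs algebra_simps)
      also have "\<dots> = (1 - g t) * (\<integral>\<omega>. Z t \<omega> * E r \<omega> \<partial>M) + g t * (\<integral>\<omega>. E t \<omega> * E r \<omega> \<partial>M)"
        using iZE iE by simp
      also have "\<dots> = 0" using Suc tr orth[of t r] by simp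
      finally show "(\<integral>\<omega>. Z (Suc t) \<omega> * E r \<omega> \<partial>M) = 0" .
    qed
  qed
  define V where "V t = (\<integral>\<omega>. (Z t \<omega>)\<^sup>2 \<partial>M)" for t
  have V0: "0 \<le> V t" for t unfolding V_def by simp
  have Vs: "V (Suc t) \<le> (1 - g t)\<^sup>2 * V t + (g t)\<^sup>2" for t
  proof -
    have "V (Suc t) = (\<integral>\<omega>. (1 - g t)\<^sup>2 * (Z t \<omega>)\<^sup>2 + (2 * (1 - g t) * g t) * (Z t \<omega> * E t \<omega>) + (g t)\<^sup>2 * (E t \<omega>)\<^sup>2 \<partial>M)"
      unfolding V_def Zs by (simp add: power2_eq_square algebra_simps)
    also have "\<dots> = (1 - g t)\<^sup>2 * V t + (2 * (1 - g t) * g t) * (\<integral>\<omega>. Z t \<omega> * E t \<omega> \<partial>M) + (g t)\<^sup>2 * (\<integral>\<omega>. (E t \<omega>)\<^sup>2 \<partial>M)"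
      unfolding V_def using iZZ iZE iEE by simp
    also have "(\<integral>\<omega>. Z t \<omega> * E t \<omega> \<partial>M) = 0" using ZE0 by simp
    also have "(\<integral>\<omega>. (E t \<omega>)\<^sup>2 \<partial>M) \<le> 1"
    proof -
      have "(\<integral>\<omega>. (E t \<omega>)\<^sup>2 \<partial>M) \<le> (\<integral>\<omega>. 1 \<partial>M)"
        using iEE by (intro integral_mono) (auto simp: abs_square_le_1 Eb)
      then show ?thesis by (simp add: prob_space)
    qed
    then have "(g t)\<^sup>2 * (\<integral>\<omega>. (E t \<omega>)\<^sup>2 \<partial>M) \<le> (g t)\<^sup>2" by (simp add: mult_left_le)
    finally show ?thesis by simp
  qed
  obtain T where T: "\<And>t. t \<ge> T \<Longrightarrow> g t \<le> 1"
    using order_tendstoD(2)[OF gl, of 1] unfolding eventually_sequentially by force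
  have Vs2: "V (Suc t) \<le> (1 - g t) * V t + (g t)\<^sup>2" if "t \<ge> T" for t
  proof -
    have "(1 - g t)\<^sup>2 \<le> 1 - g t" using T[OF that] g0[of t] by (simp add: power2_eq_square mult_left_le_one_le)
    then have "(1 - g t)\<^sup>2 * V t \<le> (1 - g t) * V t" using V0 by (rule mult_right_mono)
    then show ?thesis using Vs[of t] by simp
  qed
  define S where "S = (\<Sum>t<T. g t * V t) + V T + suminf (\<lambda>t. (g t)\<^sup>2)"
  have sq0: "0 \<le> (g t)\<^sup>2" for t by simp
  have ind: "(\<Sum>t<T + m. g t * V t) + V (T + m) \<le> (\<Sum>t<T. g t * V t) + V T + (\<Sum>t<T + m. (g t)\<^sup>2)" for m
  proof (induction m)
    case 0 then show ?case by (simp add: sum_nonneg)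
  next
    case (Suc m)
    have "g (T + m) * V (T + m) + V (Suc (T + m)) \<le> V (T + m) + (g (T + m))\<^sup>2"
      using Vs2[of "T + m"] by (simp add: algebra_simps)
    then show ?case using Suc by simp
  qed
  have bnd: "(\<Sum>t<n. g t * V t) \<le> S" for n
  proof -
    have sg: "(\<Sum>t<n. (g t)\<^sup>2) \<le> suminf (\<lambda>t. (g t)\<^sup>2)" for n using gsq by (intro sum_le_suminf) auto
    show ?thesis
    proof (cases "n \<le> T")
      case True
      then have "(\<Sum>t<n. g t * V t) \<le> (\<Sum>t<T. g t * V t)"
        using g0 V0 by (intro sum_mono2) auto
      moreover have "0 \<le> suminf (\<lambda>t. (g t)\<^sup>2)" using gsq by (intro suminf_nonneg) auto
      ultimately show ?thesis using V0[of T] unfolding S_def by simp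
    next
      case False
      then have "(\<Sum>t<n. g t * V t) + V n \<le> (\<Sum>t<T. g t * V t) + V T + (\<Sum>t<n. (g t)\<^sup>2)"
        using ind[of "n - T"] by simp
      then show ?thesis using V0[of n] sg[of n] unfolding S_def by simp
    qed
  qed
  have sumV: "summable (\<lambda>t. g t * V t)"
    by (rule summableI_nonneg_bounded[OF _ bnd]) (simp add: g0 V0)
  have nn: "(\<integral>\<^sup>+\<omega>. ennreal (g t * (Z t \<omega>)\<^sup>2) \<partial>M) = ennreal (g t * V t)" for t
  proof -
    have "(\<integral>\<^sup>+\<omega>. ennreal (g t * (Z t \<omega>)\<^sup>2) \<partial>M) = ennreal (\<integral>\<omega>. g t * (Z t \<omega>)\<^sup>2 \<partial>M)"
      using iZZ g0 by (intro nn_integral_eq_integral) auto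
    then show ?thesis unfolding V_def by simp
  qed
  have mt: "(\<lambda>\<omega>. ennreal (g t * (Z t \<omega>)\<^sup>2)) \<in> borel_measurable M" for t
  proof -
    have "(\<lambda>\<omega>. (Z t \<omega>)\<^sup>2) \<in> borel_measurable M" using Zm[of t] by (rule borel_measurable_power)
    with borel_measurable_const have "(\<lambda>\<omega>. g t * (Z t \<omega>)\<^sup>2) \<in> borel_measurable M"
      by (rule borel_measurable_times)
    from measurable_compose[OF this measurable_ennreal] show ?thesis by simp
  qed
  have ms: "(\<lambda>\<omega>. \<Sum>t. ennreal (g t * (Z t \<omega>)\<^sup>2)) \<in> borel_measurable M"
    by (rule borel_measurable_suminf_order) (rule mt)
  have "(\<integral>\<^sup>+\<omega>. (\<Sum>t. ennreal (g t * (Z t \<omega>)\<^sup>2)) \<partial>M) = (\<Sum>t. ennreal (g t * V t))"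
    unfolding nn_integral_suminf[OF mt] nn by (rule refl)
  also have "\<dots> \<noteq> \<infinity>"
  proof -
    have "0 \<le> g t * V t" for t using g0[of t] V0[of t] by (rule mult_nonneg_nonneg)
    then have "(\<Sum>t. ennreal (g t * V t)) \<noteq> top" by (rule ennreal_suminf_neq_top[OF sumV])
    then show ?thesis by (simp only: infinity_ennreal_def not_False_eq_True)
  qed
  finally have "AE \<omega> in M. (\<Sum>t. ennreal (g t * (Z t \<omega>)\<^sup>2)) \<noteq> \<infinity>"
    by (rule nn_integral_noteq_infinite[OF ms])
  then show ?thesis
  proof (rule eventually_mono)
    fix \<omega> assume fin: "(\<Sum>t. ennreal (g t * (Z t \<omega>)\<^sup>2)) \<noteq> \<infinity>"
    have su: "summable (\<lambda>t. g t * (Z t \<omega>)\<^sup>2)"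
      using fin g0 by (intro summable_suminf_not_top) auto
    define b where "b = max \<bar>Z T \<omega>\<bar> 1"
    have b1: "1 \<le> b" by (simp add: b_def)
    have bZ: "\<bar>Z (T + m) \<omega>\<bar> \<le> b" for m
    proof (induction m)
      case 0 then show ?case by (simp add: b_def)
    next
      case (Suc m)
      let ?t = "T + m"
      have g1: "0 \<le> 1 - g ?t" using T[of ?t] by simp
      have "\<bar>Z (Suc ?t) \<omega>\<bar> \<le> (1 - g ?t) * \<bar>Z ?t \<omega>\<bar> + g ?t * \<bar>E ?t \<omega>\<bar>"
        unfolding Zs using g1 g0[of ?t] abs_triangle_ineq[of "(1 - g ?t) * Z ?t \<omega>" "g ?t * E ?t \<omega>"]
        by (simp add: abs_mult)
      also have "\<dots> \<le> (1 - g ?t) * b + g ?t * b"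
        using Suc g1 g0[of ?t] Eb[of ?t \<omega>] b1 by (intro add_mono mult_left_mono) auto
      finally show ?case by (simp add: algebra_simps)
    qed
    have "(\<lambda>t. (Z t \<omega>)\<^sup>2) \<longlonglongrightarrow> 0"
    proof (rule L2[OF g0 ns gl su])
      show "0 \<le> (Z t \<omega>)\<^sup>2" for t by simp
      show "0 < 2 * b * (1 + b)" using b1 by simp
      show "eventually (\<lambda>t. (Z (Suc t) \<omega>)\<^sup>2 \<le> (Z t \<omega>)\<^sup>2 + 2 * b * (1 + b) * g t) sequentially"
        unfolding eventually_sequentially
      proof (intro exI allI impI)
        fix t assume tT: "T \<le> t"
        have zt: "\<bar>Z t \<omega>\<bar> \<le> b" using bZ[of "t - T"] tT by simp
        have zs: "\<bar>Z (Suc t) \<omega>\<bar> \<le> b" using bZ[of "Suc t - T"] tT by simp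
        have d: "\<bar>Z (Suc t) \<omega> - Z t \<omega>\<bar> \<le> g t * (1 + b)"
        proof -
          have "Z (Suc t) \<omega> - Z t \<omega> = g t * (E t \<omega> - Z t \<omega>)" by (simp add: Zs algebra_simps)
          moreover have "\<bar>E t \<omega> - Z t \<omega>\<bar> \<le> 1 + b" using Eb[of t \<omega>] zt by simp
          ultimately show ?thesis using g0[of t] by (simp add: abs_mult mult_left_mono)
        qed
        have "(Z (Suc t) \<omega>)\<^sup>2 - (Z t \<omega>)\<^sup>2 = (Z (Suc t) \<omega> - Z t \<omega>) * (Z (Suc t) \<omega> + Z t \<omega>)"
          by (simp add: power2_eq_square algebra_simps)
        also have "\<dots> \<le> \<bar>Z (Suc t) \<omega> - Z t \<omega>\<bar> * \<bar>Z (Suc t) \<omega> + Z t \<omega>\<bar>"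
          by (metis abs_ge_self abs_mult)
        also have "\<dots> \<le> (g t * (1 + b)) * (2 * b)"
          using d zt zs by (intro mult_mono) auto
        finally show "(Z (Suc t) \<omega>)\<^sup>2 \<le> (Z t \<omega>)\<^sup>2 + 2 * b * (1 + b) * g t" by (simp add: algebra_simps)
      qed
    qed
    then have "(\<lambda>t. sqrt ((Z t \<omega>)\<^sup>2)) \<longlonglongrightarrow> sqrt 0" by (intro tendsto_real_sqrt)
    then have "(\<lambda>t. \<bar>Z t \<omega>\<bar>) \<longlonglongrightarrow> 0" by simp
    then show "(\<lambda>t. Zp g (\<lambda>s. E s \<omega>) t) \<longlonglongrightarrow> 0" unfolding Z_def by (simp add: tendsto_rabs_zero_iff)
  qed
qed

lemma pmf_indep:
  fixes P :: "'i \<Rightarrow> 'b::finite pmf" and f h :: "'b \<Rightarrow> real"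
  assumes xy: "x \<noteq> y"
  shows "(\<integral>\<omega>. f (\<omega> x) * h (\<omega> y) \<partial>PiM UNIV (\<lambda>i. measure_pmf (P i))) = (\<integral>z. f z \<partial>P x) * (\<integral>z. h z \<partial>P y)"
proof -
  interpret product_prob_space "\<lambda>i. measure_pmf (P i)" UNIV
    by unfold_locales
  let ?J = "{x, y}"
  define k where "k i = (if i = x then f else h)" for i
  define G where "G \<rho> = (\<Prod>i\<in>?J. k i (\<rho> i))" for \<rho> :: "'i \<Rightarrow> 'b"
  have Gm: "G \<in> borel_measurable (PiM ?J (\<lambda>i. measure_pmf (P i)))"
    unfolding G_def
  proof (rule borel_measurable_prod)
    fix i assume "i \<in> ?J"
    then have "(\<lambda>\<rho>. \<rho> i) \<in> measurable (PiM ?J (\<lambda>i. measure_pmf (P i))) (measure_pmf (P i))"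
      by (rule measurable_component_singleton)
    moreover have "k i \<in> borel_measurable (measure_pmf (P i))" by simp
    ultimately show "(\<lambda>\<rho>. k i (\<rho> i)) \<in> borel_measurable (PiM ?J (\<lambda>i. measure_pmf (P i)))"
      by (rule measurable_compose)
  qed
  have rm: "(\<lambda>\<omega>. restrict \<omega> ?J) \<in> measurable (PiM UNIV (\<lambda>i. measure_pmf (P i))) (PiM ?J (\<lambda>i. measure_pmf (P i)))"
    by (rule measurable_restrict_subset) simp
  have eq: "G (restrict \<omega> ?J) = f (\<omega> x) * h (\<omega> y)" for \<omega>
    unfolding G_def k_def using xy by simp
  have "(\<integral>\<omega>. f (\<omega> x) * h (\<omega> y) \<partial>PiM UNIV (\<lambda>i. measure_pmf (P i)))
      = (\<integral>\<omega>. G (restrict \<omega> ?J) \<partial>PiM UNIV (\<lambda>i. measure_pmf (P i)))" by (simp add: eq)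
  also have "\<dots> = (\<integral>\<rho>. G \<rho> \<partial>distr (PiM UNIV (\<lambda>i. measure_pmf (P i))) (PiM ?J (\<lambda>i. measure_pmf (P i))) (\<lambda>\<omega>. restrict \<omega> ?J))"
    by (rule integral_distr[OF rm Gm, symmetric])
  also have "\<dots> = (\<integral>\<rho>. G \<rho> \<partial>PiM ?J (\<lambda>i. measure_pmf (P i)))"
    by (subst distr_PiM_restrict_finite) auto
  also have "\<dots> = (\<Prod>i\<in>?J. integral\<^sup>L (measure_pmf (P i)) (k i))"
    unfolding G_def by (rule product_integral_prod) (auto intro: integrable_measure_pmf_finite)
  also have "\<dots> = (\<integral>z. f z \<partial>P x) * (\<integral>z. h z \<partial>P y)"
    using xy by (simp add: k_def)
  finally show ?thesis .
qed

lemma pmf_center_int: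
  fixes q :: "'s::finite pmf"
  shows "(\<integral>j. (if j = k then 1 else 0) - pmf q k \<partial>measure_pmf q) = 0"
proof -
  have "(\<integral>j. (if j = k then 1 else 0) - pmf q k \<partial>measure_pmf q)
      = (\<Sum>j\<in>UNIV. ((if j = k then 1 else 0) - pmf q k) * pmf q j)"
    by (rule integral_measure_pmf_real) auto
  also have "\<dots> = (\<Sum>j\<in>UNIV. (if j = k then pmf q j else 0)) - pmf q k * (\<Sum>j\<in>UNIV. pmf q j)"
  proof -
    have "((if j = k then 1 else 0) - pmf q k) * pmf q j = (if j = k then pmf q j else 0) - pmf q k * pmf q j" for j
      by (simp add: algebra_simps)
    then show ?thesis by (simp only: sum_subtractf sum_distrib_left)
  qed
  also have "(\<Sum>j\<in>UNIV. pmf q j) = 1" by (rule sum_pmf_eq_1) auto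
  finally show ?thesis by simp
qed

theorem theorem2:
  fixes c :: "'s::finite \<Rightarrow> 'a::finite \<Rightarrow> real"
    and \<theta> :: real
    and p :: "'s \<Rightarrow> 'a \<Rightarrow> 's pmf"
    and U Uhat :: "'s \<Rightarrow> 'a \<Rightarrow> (real ^ 's) set"
    and Qstar Q0 :: "'s \<Rightarrow> 'a \<Rightarrow> real"
    and \<gamma> :: "nat \<Rightarrow> real"
  assumes theta: "0 < \<theta>" "\<theta> < 1"
    and U_ne: "\<And>i a. U i a \<noteq> {}" and U_compact: "\<And>i a. compact (U i a)"
    and P_simplex: "\<And>i a. (\<lambda>x. pmf_vec (p i a) + x) ` U i a \<subseteq> prob_simplex"
    and Uhat_ne: "\<And>i a. Uhat i a \<noteq> {}" and Uhat_compact: "\<And>i a. compact (Uhat i a)"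
    and U_sub: "\<And>i a. U i a \<subseteq> Uhat i a"
    and Qstar: "\<And>i a. Qstar i a = c i a
                  + \<theta> * support_fun ((\<lambda>x. pmf_vec (p i a) + x) ` U i a) (vfun Qstar)"
    and gamma_nonneg: "\<And>t. 0 \<le> \<gamma> t"
    and gamma_div: "\<not> summable \<gamma>"
    and gamma_sq: "summable (\<lambda>t. (\<gamma> t)\<^sup>2)"
    and contr: "\<theta> * (1 + Max (range (\<lambda>(i, a). beta_ia (Uhat i a) (U i a)))) < 1"
  shows "AE \<omega> in PiM UNIV (\<lambda>(t, i, a). measure_pmf (p i a)).
           \<exists>Q'. (\<forall>i a. (\<lambda>t. robust_Q_iter Q0 c \<theta> Uhat \<gamma> \<omega> t i a) \<longlonglongrightarrow> Q' i a)
              \<and> Qnorm (\<lambda>i a. Q' i a - Qstar i a)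
                  \<le> (let \<beta> = Max (range (\<lambda>(i, a). beta_ia (Uhat i a) (U i a)))
                     in \<theta> * \<beta> / (1 - \<theta> * (1 + \<beta>))) * Qnorm Qstar"
proof -
  define \<beta> where "\<beta> = Max (range (\<lambda>(i, a). beta_ia (Uhat i a) (U i a)))"
  have bb: "beta_ia (Uhat i a) (U i a) \<le> \<beta>" for i a
    unfolding \<beta>_def by (rule Max_ge) (auto intro: image_eqI[where x="(i, a)"])
  have b0: "0 \<le> \<beta>"
    using beta_nonneg[OF U_ne Uhat_compact Uhat_ne] bb order_trans by blast
  have th: "0 \<le> \<theta>" using theta by simp
  have rl: "\<theta> * (1 + \<beta>) < 1" using contr unfolding \<beta>_def .
  define F where "F = Fop c \<theta> Uhat p"
  define \<rho> where "\<rho> = \<theta> * (1 + \<beta>)"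
  have r: "0 \<le> \<rho>" "\<rho> < 1" using th b0 rl by (auto simp: \<rho>_def)
  have Fc: "Qnorm (\<lambda>i a. F Q i a - F Q' i a) \<le> \<rho> * Qnorm (\<lambda>i a. Q i a - Q' i a)" for Q Q'
    unfolding F_def \<rho>_def by (rule F_contr[OF U_ne Uhat_compact Uhat_ne P_simplex bb b0 th])
  obtain Qf where Qf: "F Qf = Qf" using fixpoint[OF r Fc] by blast
  have bound: "Qnorm (\<lambda>i a. Qf i a - Qstar i a) \<le> \<theta> * \<beta> / (1 - \<theta> * (1 + \<beta>)) * Qnorm Qstar"
    by (rule final_bound[OF U_ne U_compact Uhat_compact Uhat_ne U_sub P_simplex bb b0 th rl Qf[unfolded F_def] Qstar])
  define g where "g t = \<gamma> (Suc t)" for t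
  have g0: "0 \<le> g t" for t by (simp add: g_def gamma_nonneg)
  have gns: "\<not> summable g" unfolding g_def using gamma_div summable_Suc_iff[of \<gamma>] by simp
  have gsq: "summable (\<lambda>t. (g t)\<^sup>2)" unfolding g_def using gamma_sq summable_Suc_iff[of "\<lambda>t. (\<gamma> t)\<^sup>2"] by simp
  have gl: "g \<longlonglongrightarrow> 0"
  proof -
    have "(\<lambda>t. (g t)\<^sup>2) \<longlonglongrightarrow> 0" using gsq by (rule summable_LIMSEQ_zero)
    then have "(\<lambda>t. sqrt ((g t)\<^sup>2)) \<longlonglongrightarrow> sqrt 0" by (intro tendsto_real_sqrt)
    then show ?thesis using g0 by simp
  qed
  define E where "E \<omega> t i a k = (if \<omega> (Suc t, i, a) = k then 1 else 0) - pmf (p i a) k"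
    for \<omega> :: "nat \<times> 's \<times> 'a \<Rightarrow> 's" and t i a k
  let ?M = "PiM UNIV (\<lambda>(t, i, a). measure_pmf (p i a))"
  interpret M: prob_space ?M by (rule prob_space_PiM) (auto simp: split_beta prob_space_measure_pmf)
  have AEZ: "AE \<omega> in ?M. \<forall>i a k. (\<lambda>t. Zp g (\<lambda>s. E \<omega> s i a k) t) \<longlonglongrightarrow> 0"
  proof -
    have "AE \<omega> in ?M. \<forall>x\<in>UNIV. (\<lambda>t. Zp g (\<lambda>s. E \<omega> s (fst x) (fst (snd x)) (snd (snd x))) t) \<longlonglongrightarrow> 0"
    proof (rule AE_finite_allI)
      fix x :: "'s \<times> 'a \<times> 's"
      obtain i a k where x: "x = (i, a, k)" by (cases x) auto
      have "AE \<omega> in ?M. (\<lambda>t. Zp g (\<lambda>s. E \<omega> s i a k) t) \<longlonglongrightarrow> 0"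
      proof (rule M.Zp_AE[OF _ _ _ g0 gns gl gsq])
        fix t
        have "(\<lambda>\<omega>. \<omega> (Suc t, i, a)) \<in> measurable ?M (measure_pmf (p i a))"
          using measurable_component_singleton[of "(Suc t, i, a)" UNIV "\<lambda>(t, i, a). measure_pmf (p i a)"]
          by simp
        moreover have "(\<lambda>j. (if j = k then 1 else 0) - pmf (p i a) k) \<in> borel_measurable (measure_pmf (p i a))"
          by simp
        ultimately have "(\<lambda>\<omega>. (\<lambda>j. (if j = k then 1 else 0) - pmf (p i a) k) (\<omega> (Suc t, i, a))) \<in> borel_measurable ?M"
          by (rule measurable_compose)
        then show "(\<lambda>\<omega>. E \<omega> t i a k) \<in> borel_measurable ?M" unfolding E_def by simp
      next
        fix t \<omega>
        show "\<bar>E \<omega> t i a k\<bar> \<le> 1" unfolding E_def using pmf_nonneg[of "p i a" k] pmf_le_1[of "p i a" k] by auto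
      next
        fix s r :: nat assume sr: "s < r"
        let ?e = "\<lambda>j. (if j = k then 1 else 0) - pmf (p i a) k"
        have "(\<integral>\<omega>. E \<omega> s i a k * E \<omega> r i a k \<partial>?M)
            = (\<integral>\<omega>. ?e (\<omega> (Suc s, i, a)) * ?e (\<omega> (Suc r, i, a)) \<partial>PiM UNIV (\<lambda>x. measure_pmf ((\<lambda>(t, i, a). p i a) x)))"
        proof -
          have meq: "(\<lambda>(t, i, a). measure_pmf (p i a)) = (\<lambda>x. measure_pmf ((\<lambda>(t::nat, i, a). p i a) x))"
            by (auto simp: fun_eq_iff split: prod.splits)
          show ?thesis unfolding E_def meq by (rule refl)
        qed
        also have "\<dots> = (\<integral>z. ?e z \<partial>measure_pmf ((\<lambda>(t, i, a). p i a) (Suc s, i, a))) * (\<integral>z. ?e z \<partial>measure_pmf ((\<lambda>(t, i, a). p i a) (Suc r, i, a)))"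
          using sr by (intro pmf_indep) simp
        also have "\<dots> = 0" by (simp add: pmf_center_int)
        finally show "(\<integral>\<omega>. E \<omega> s i a k * E \<omega> r i a k \<partial>?M) = 0" .
      qed
      then show "AE \<omega> in ?M. (\<lambda>t. Zp g (\<lambda>s. E \<omega> s (fst x) (fst (snd x)) (snd (snd x))) t) \<longlonglongrightarrow> 0"
        using x by simp
    qed simp
    then show ?thesis by (rule eventually_mono) auto
  qed
  show ?thesis
    using AEZ
  proof (rule eventually_mono)
    fix \<omega> assume Z: "\<forall>i a k. (\<lambda>t. Zp g (\<lambda>s. E \<omega> s i a k) t) \<longlonglongrightarrow> 0"
    let ?Q = "\<lambda>t. robust_Q_iter Q0 c \<theta> Uhat \<gamma> \<omega> t"
    have rec: "?Q (Suc t) i a = (1 - g t) * ?Q t i a + g t * (F (?Q t) i a + \<theta> * (\<Sum>k\<in>UNIV. vfun (?Q t) $ k * E \<omega> t i a k))"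
      for t i a
    proof -
      let ?v = "vfun (?Q t)" and ?j = "\<omega> (Suc t, i, a)"
      have s1: "(\<Sum>k\<in>UNIV. ?v $ k * E \<omega> t i a k) = ?v $ ?j - pmf_vec (p i a) \<bullet> ?v"
      proof -
        have pw: "?v $ k * E \<omega> t i a k = (if ?j = k then ?v $ k else 0) - pmf (p i a) k * ?v $ k" for k
          by (simp add: E_def algebra_simps)
        have "(\<Sum>k\<in>UNIV. ?v $ k * E \<omega> t i a k) = (\<Sum>k\<in>UNIV. (if ?j = k then ?v $ k else 0)) - (\<Sum>k\<in>UNIV. pmf (p i a) k * ?v $ k)"
          by (simp only: pw sum_subtractf)
        also have "(\<Sum>k\<in>UNIV. (if ?j = k then ?v $ k else 0)) = ?v $ ?j" by simp
        also have "(\<Sum>k\<in>UNIV. pmf (p i a) k * ?v $ k) = pmf_vec (p i a) \<bullet> ?v"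
          by (simp add: inner_vec_def pmf_vec_def)
        finally show ?thesis .
      qed
      have s2: "Min (range (?Q t ?j)) = ?v $ ?j" by (simp add: vfun_def)
      show ?thesis unfolding s1 F_def Fop_def by (simp add: Let_def s2 g_def algebra_simps)
    qed
    have conv: "\<forall>i a. (\<lambda>t. ?Q t i a) \<longlonglongrightarrow> Qf i a"
    proof (intro allI)
      fix i a
      show "(\<lambda>t. ?Q t i a) \<longlonglongrightarrow> Qf i a"
      proof (rule pathwise[OF r Fc Qf th rec _ g0 gns gl])
        show "\<bar>E \<omega> t i a k\<bar> \<le> 1" for t i a k
          unfolding E_def using pmf_nonneg[of "p i a" k] pmf_le_1[of "p i a" k] by auto
        show "(\<lambda>t. Zp g (\<lambda>s. E \<omega> s i a k) t) \<longlonglongrightarrow> 0" for i a k using Z by blast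
      qed
    qed
    show "\<exists>Q'. (\<forall>i a. (\<lambda>t. ?Q t i a) \<longlonglongrightarrow> Q' i a)
              \<and> Qnorm (\<lambda>i a. Q' i a - Qstar i a)
                  \<le> (let \<beta> = Max (range (\<lambda>(i, a). beta_ia (Uhat i a) (U i a)))
                     in \<theta> * \<beta> / (1 - \<theta> * (1 + \<beta>))) * Qnorm Qstar"
      using conv bound unfolding \<beta>_def Let_def by blast
  qed
qed

end
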